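(* Let $\mu_1,\mu_2\in\mathcal M^+_1(\mathbb R)$ satisfy $\operatorname{supp}\mu_1\subset(-\infty,a)$ and $\operatorname{supp}\mu_2\subset(a,\infty)$ for some $a\in\mathbb R$. Then there exists $\mu\in\mathcal M^+_2(\mathbb R)$ such that $$C_1[\mu_1](z)\,C_1[\mu_2](z)=C_2[\mu](z),\qquad z\in\mathbb C^+,$$ if and only if $$\int_{(a,\infty)}\int_{(-\infty,a)}\frac{\mu_1(ds)\,\mu_2(dt)}{t-s}<\infty.$$
   Context: $\mathbb C^+=\{z:\operatorname{Im}z>0\}$. For $\alpha\ge0$, $\mathcal M^+_\alpha(\mathbb R)$ is the set of positive Borel (Radon) measures $\mu$ on $\mathbb R$ with $\int_{\mathbb R}(1+|t|)^{-\alpha}\mu(dt)<\infty$. For $\alpha>0$, $C_\alpha[\mu](z)=\int_{\mathbb R}\frac{\mu(dt)}{(z+t)^\alpha}$, $z\in\mathbb C^+$. *)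

theory Defs
  imports "HOL-Analysis.Analysis"
begin

definition Mplus :: "real \<Rightarrow> real measure \<Rightarrow> bool" where
  "Mplus \<alpha> \<mu> \<longleftrightarrow> sets \<mu> = sets borel \<and>
     (\<integral>\<^sup>+ t. ennreal ((1 + \<bar>t\<bar>) powr (- \<alpha>)) \<partial>\<mu>) < \<infinity>"

definition msupp :: "real measure \<Rightarrow> real set" where
  "msupp \<mu> = {x. \<forall>e>0. emeasure \<mu> (ball x e) > 0}"

definition cauchy_tr :: "nat \<Rightarrow> real measure \<Rightarrow> complex \<Rightarrow> complex" where
  "cauchy_tr n \<mu> z = (\<integral> t. 1 / (z + complex_of_real t) ^ n \<partial>\<mu>)"

end

theory Submission
  imports Defs "HOL-Real_Asymp.Real_Asymp"
begin

lemma compact_null_outside_msupp: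
  assumes sets: "sets \<mu> = sets borel" and K: "compact K" "K \<inter> msupp \<mu> = {}"
  shows "K \<in> null_sets \<mu>"
proof -
  have "\<forall>x\<in>K. \<exists>e>0. emeasure \<mu> (ball x e) = 0"
  proof
    fix x assume "x \<in> K"
    then have "x \<notin> msupp \<mu>" using K(2) by blast
    then show "\<exists>e>0. emeasure \<mu> (ball x e) = 0" unfolding msupp_def by auto
  qed
  then obtain e where e: "\<And>x. x \<in> K \<Longrightarrow> e x > 0 \<and> emeasure \<mu> (ball x (e x)) = 0" by metis
  have "K \<subseteq> (\<Union>x\<in>K. ball x (e x))" using e by auto
  then obtain F where F: "F \<subseteq> K" "finite F" "K \<subseteq> (\<Union>x\<in>F. ball x (e x))"
    using compactE_image[OF K(1), of K "\<lambda>x. ball x (e x)"] by auto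
  have "(\<Union>x\<in>F. ball x (e x)) \<in> null_sets \<mu>"
    using F e sets by (intro null_sets_UN') (auto intro: countable_finite simp: null_sets_def)
  moreover have "K \<in> sets \<mu>" using sets K(1) by (simp add: compact_imp_closed)
  ultimately show ?thesis using F(3) null_sets_subset by blast
qed

lemma msupp_left_gap:
  assumes sets: "sets \<mu> = sets borel" and S: "msupp \<mu> \<subseteq> {..<a}"
  shows "\<exists>d>0. {a-d..} \<in> null_sets \<mu>"
proof -
  have "a \<notin> msupp \<mu>" using S by auto
  then obtain e where e: "e > 0" "emeasure \<mu> (ball a e) = 0"
    unfolding msupp_def by (auto simp: not_less)
  have b: "ball a e \<in> null_sets \<mu>" using e sets by (simp add: null_sets_def)
  have "(\<Union>n::nat. {a..a+real n}) \<in> null_sets \<mu>"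
    using S sets by (intro null_sets_UN compact_null_outside_msupp) auto
  moreover have "{a..} \<subseteq> (\<Union>n::nat. {a..a+real n})"
  proof
    fix x assume "x \<in> {a..}"
    moreover obtain n where "x - a \<le> real n" using real_arch_simple by blast
    ultimately have "x \<in> {a..a+real n}" by auto
    then show "x \<in> (\<Union>n::nat. {a..a+real n})" by blast
  qed
  ultimately have "{a..} \<in> null_sets \<mu>" using sets null_sets_subset by (metis atLeast_borel)
  then have "ball a e \<union> {a..} \<in> null_sets \<mu>" using b by auto
  moreover have "{a - e/2..} \<subseteq> ball a e \<union> {a..}" using e by (auto simp: dist_real_def)
  moreover have "{a - e/2..} \<in> sets \<mu>" using sets by simp
  ultimately show ?thesis using e null_sets_subset by (intro exI[of _ "e/2"]) auto
qed

lemma msupp_right_gap: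
  assumes sets: "sets \<mu> = sets borel" and S: "msupp \<mu> \<subseteq> {a<..}"
  shows "\<exists>d>0. {..a+d} \<in> null_sets \<mu>"
proof -
  have "a \<notin> msupp \<mu>" using S by auto
  then obtain e where e: "e > 0" "emeasure \<mu> (ball a e) = 0"
    unfolding msupp_def by (auto simp: not_less)
  have b: "ball a e \<in> null_sets \<mu>" using e sets by (simp add: null_sets_def)
  have "(\<Union>n::nat. {a-real n..a}) \<in> null_sets \<mu>"
    using S sets by (intro null_sets_UN compact_null_outside_msupp) auto
  moreover have "{..a} \<subseteq> (\<Union>n::nat. {a-real n..a})"
  proof
    fix x assume "x \<in> {..a}"
    moreover obtain n where "a - x \<le> real n" using real_arch_simple by blast
    ultimately have "x \<in> {a-real n..a}" by auto
    then show "x \<in> (\<Union>n::nat. {a-real n..a})" by blast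
  qed
  ultimately have "{..a} \<in> null_sets \<mu>" using sets null_sets_subset by (metis atMost_borel)
  then have "ball a e \<union> {..a} \<in> null_sets \<mu>" using b by auto
  moreover have "{..a + e/2} \<subseteq> ball a e \<union> {..a}" using e by (auto simp: dist_real_def)
  moreover have "{..a + e/2} \<in> sets \<mu>" using sets by simp
  ultimately show ?thesis using e null_sets_subset by (intro exI[of _ "e/2"]) auto
qed

lemma Mplus_sets: "Mplus \<alpha> \<mu> \<Longrightarrow> sets \<mu> = sets borel"
  by (simp add: Mplus_def)

lemma Mplus_meas:
  assumes "Mplus \<alpha> \<mu>" "f \<in> borel_measurable borel"
  shows "f \<in> borel_measurable \<mu>"
  using assms(2) by (simp only: measurable_cong_sets[OF Mplus_sets[OF assms(1)] refl])

lemma Mplus_sigma_finite: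
  assumes M: "Mplus \<alpha> \<mu>" and a: "0 \<le> \<alpha>"
  shows "sigma_finite_measure \<mu>"
proof
  let ?w = "\<lambda>t::real. (1 + \<bar>t\<bar>) powr (- \<alpha>)"
  have sets: "sets \<mu> = sets borel" using M by (rule Mplus_sets)
  have fin: "(\<integral>\<^sup>+ t. ennreal (?w t) \<partial>\<mu>) < \<infinity>" using M unfolding Mplus_def by blast
  let ?A = "range (\<lambda>n::nat. {- real n .. real n})"
  have fn: "emeasure \<mu> {- real n .. real n} \<noteq> \<infinity>" for n
  proof -
    let ?c = "(1 + real n) powr (- \<alpha>)"
    have c: "0 < ?c" by simp
    have meas: "{- real n .. real n} \<in> sets \<mu>" unfolding sets by simp
    have "ennreal ?c * emeasure \<mu> {- real n .. real n}
        = (\<integral>\<^sup>+ t. ennreal ?c * indicator {- real n .. real n} t \<partial>\<mu>)"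
      by (rule nn_integral_cmult_indicator[symmetric, OF meas])
    also have "\<dots> \<le> (\<integral>\<^sup>+ t. ennreal (?w t) \<partial>\<mu>)"
    proof (rule nn_integral_mono)
      fix t
      show "ennreal ?c * indicator {- real n .. real n} t \<le> ennreal (?w t)"
      proof (cases "t \<in> {- real n .. real n}")
        case True
        then have "1 + \<bar>t\<bar> \<le> 1 + real n" by auto
        then have "?c \<le> ?w t" using a by (intro powr_mono2') auto
        then show ?thesis using True by (simp add: ennreal_leI)
      next
        case False
        then show ?thesis by simp
      qed
    qed
    finally have "ennreal ?c * emeasure \<mu> {- real n .. real n} < \<infinity>"
      using fin by (rule le_less_trans)
    then have "emeasure \<mu> {- real n .. real n} < \<infinity>"
    proof -
      assume h: "ennreal ?c * emeasure \<mu> {- real n .. real n} < \<infinity>"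
      have "ennreal ?c \<noteq> 0" using c by simp
      then show ?thesis using h ennreal_mult_less_top[of "ennreal ?c" "emeasure \<mu> {- real n .. real n}"]
        by (auto simp: top_unique)
    qed
    then show ?thesis by simp
  qed
  have cov: "\<Union>?A = space \<mu>"
  proof -
    have "x \<in> \<Union>?A" for x :: real
    proof -
      obtain n where "\<bar>x\<bar> \<le> real n" using real_arch_simple by blast
      then have "x \<in> {- real n .. real n}" by auto
      then show ?thesis by blast
    qed
    moreover have "space \<mu> = UNIV" using sets_eq_imp_space_eq[OF sets] by simp
    ultimately show ?thesis by blast
  qed
  have sub: "?A \<subseteq> sets \<mu>" unfolding sets by auto
  show "\<exists>A. countable A \<and> A \<subseteq> sets \<mu> \<and> \<Union>A = space \<mu> \<and> (\<forall>a\<in>A. emeasure \<mu> a \<noteq> \<infinity>)"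
    using fn cov sub by (intro exI[of _ ?A]) auto
qed

lemma Mplus_integrable:
  fixes g :: "real \<Rightarrow> 'b::{banach, second_countable_topology}"
  assumes M: "Mplus \<alpha> \<mu>" and g: "g \<in> borel_measurable borel"
    and b: "\<And>t. norm (g t) \<le> C * (1 + \<bar>t\<bar>) powr (- \<alpha>)"
  shows "integrable \<mu> g"
proof -
  have "norm (g 0) \<le> C * (1 + \<bar>0\<bar>) powr (- \<alpha>)" by (rule b)
  then have "norm (g 0) \<le> C" by simp
  then have C: "0 \<le> C" using norm_ge_zero[of "g 0"] by linarith
  have le: "ennreal (norm (g t)) \<le> ennreal C * ennreal ((1 + \<bar>t\<bar>) powr (- \<alpha>))" for t
  proof -
    have "ennreal (norm (g t)) \<le> ennreal (C * (1 + \<bar>t\<bar>) powr (- \<alpha>))"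
      by (rule ennreal_leI[OF b])
    also have "\<dots> = ennreal C * ennreal ((1 + \<bar>t\<bar>) powr (- \<alpha>))"
      using C by (rule ennreal_mult) simp
    finally show ?thesis .
  qed
  have "(\<integral>\<^sup>+ t. ennreal (norm (g t)) \<partial>\<mu>) \<le> (\<integral>\<^sup>+ t. ennreal C * ennreal ((1 + \<bar>t\<bar>) powr (- \<alpha>)) \<partial>\<mu>)"
    by (intro nn_integral_mono le)
  also have "\<dots> = ennreal C * (\<integral>\<^sup>+ t. ennreal ((1 + \<bar>t\<bar>) powr (- \<alpha>)) \<partial>\<mu>)"
    using M by (intro nn_integral_cmult) (simp add: Mplus_meas)
  also have "\<dots> < \<infinity>" using M unfolding Mplus_def by (simp add: ennreal_mult_less_top)
  finally have fin: "(\<integral>\<^sup>+ t. ennreal (norm (g t)) \<partial>\<mu>) < \<infinity>" .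
  have "g \<in> borel_measurable \<mu>" using M g by (rule Mplus_meas)
  then show ?thesis using fin by (simp add: integrable_iff_bounded)
qed

definition Kz :: "complex \<Rightarrow> real" where "Kz z = 1 + (1 + cmod z) / Im z"

lemma Kz_pos: "Im z > 0 \<Longrightarrow> Kz z > 0"
  by (simp add: Kz_def add_pos_nonneg)

lemma Kz_bound:
  assumes "Im z > 0"
  shows "1 + \<bar>t\<bar> \<le> Kz z * cmod (z + complex_of_real t)"
proof -
  have i: "Im z \<le> cmod (z + complex_of_real t)"
    using abs_Im_le_cmod[of "z + complex_of_real t"] by simp
  have t: "\<bar>t\<bar> \<le> cmod (z + complex_of_real t) + cmod z"
    using norm_triangle_ineq4[of "z + complex_of_real t" z] by simp
  have "1 + cmod z \<le> (1 + cmod z) / Im z * cmod (z + complex_of_real t)"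
  proof -
    have "(1 + cmod z) / Im z * cmod (z + complex_of_real t) \<ge> (1 + cmod z) / Im z * Im z"
      using i assms by (intro mult_left_mono) auto
    then show ?thesis using assms by simp
  qed
  then show ?thesis using t unfolding Kz_def by (simp add: algebra_simps)
qed

lemma nonzero_zt: "Im z > 0 \<Longrightarrow> z + complex_of_real t \<noteq> 0"
  by (metis Im_complex_of_real add.right_neutral less_irrefl plus_complex.sel(2) zero_complex.sel(2))

lemma w1: "(1 + \<bar>t::real\<bar>) powr (- 1) = 1 / (1 + \<bar>t\<bar>)"
  by (simp add: powr_minus_divide)
lemma w2: "(1 + \<bar>t::real\<bar>) powr (- 2) = 1 / (1 + \<bar>t\<bar>)^2"
  by (simp add: powr_minus_divide powr_numeral)

lemma cauchy1_bound':
  assumes "Im z > 0"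
  shows "norm (1 / (z + complex_of_real t)) \<le> Kz z / (1 + \<bar>t\<bar>)"
proof -
  have p: "0 < 1 + \<bar>t\<bar>" by simp
  have c: "0 < cmod (z + complex_of_real t)" using nonzero_zt[OF assms, of t] by simp
  have "1 + \<bar>t\<bar> \<le> Kz z * cmod (z + complex_of_real t)" by (rule Kz_bound[OF assms])
  then have "1 / cmod (z + complex_of_real t) \<le> Kz z / (1 + \<bar>t\<bar>)"
    using c p by (simp add: divide_simps mult.commute)
  then show ?thesis by (simp add: norm_divide)
qed

lemma cauchy1_bound:
  assumes "Im z > 0"
  shows "norm (1 / (z + complex_of_real t)) \<le> Kz z * (1 + \<bar>t\<bar>) powr (- 1)"
  using cauchy1_bound'[OF assms, of t] by (simp add: w1)

lemma cauchy2_bound: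
  assumes "Im z > 0"
  shows "norm (1 / (z + complex_of_real t)^2) \<le> (Kz z)^2 * (1 + \<bar>t\<bar>) powr (- 2)"
proof -
  have "norm (1 / (z + complex_of_real t)^2) = (norm (1 / (z + complex_of_real t)))^2"
    by (simp add: norm_divide norm_power power_one_over)
  also have "\<dots> \<le> (Kz z / (1 + \<bar>t\<bar>))^2"
    by (intro power_mono cauchy1_bound' assms) simp
  also have "\<dots> = (Kz z)^2 * (1 + \<bar>t\<bar>) powr (- 2)"
    by (simp add: w2 power_divide)
  finally show ?thesis .
qed

lemma integrable_cauchy1: "Mplus 1 \<mu> \<Longrightarrow> Im z > 0 \<Longrightarrow> integrable \<mu> (\<lambda>t. 1 / (z + complex_of_real t))"
  by (rule Mplus_integrable[where C="Kz z"]) (auto intro: cauchy1_bound)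

lemma integrable_cauchy2: "Mplus 2 \<mu> \<Longrightarrow> Im z > 0 \<Longrightarrow> integrable \<mu> (\<lambda>t. 1 / (z + complex_of_real t)^2)"
  by (rule Mplus_integrable[where C="(Kz z)^2"]) (auto intro: cauchy2_bound)

lemma der_inv:
  assumes z: "Im z > 0"
  shows "((\<lambda>u::real. - inverse (z + complex_of_real u)) has_vector_derivative 1 / (z + complex_of_real u)^2) (at u within S)"
proof -
  have nz: "z + complex_of_real u \<noteq> 0" by (rule nonzero_zt[OF z])
  have d1: "((\<lambda>w. z + w) has_field_derivative 1) (at (complex_of_real u))"
    using DERIV_add[OF DERIV_const[of z] DERIV_ident] by simp
  have "((\<lambda>w. - inverse (z + w)) has_field_derivative
         - (- (1 * inverse ((z + complex_of_real u) ^ Suc (Suc 0))))) (at (complex_of_real u))"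
    by (intro DERIV_minus DERIV_inverse_fun d1 nz)
  moreover have "- (- (1 * inverse ((z + complex_of_real u) ^ Suc (Suc 0)))) = 1 / (z + complex_of_real u)^2"
    by (simp add: divide_inverse power2_eq_square)
  ultimately have "((\<lambda>w. - inverse (z + w)) has_field_derivative 1 / (z + complex_of_real u)^2) (at (complex_of_real u))"
    by simp
  then show ?thesis by (rule has_vector_derivative_real_field)
qed

lemma ftc_pair:
  assumes st: "s < t" and z: "Im z > 0"
  shows "(\<integral>u. complex_of_real (indicator {s..t} u / (t - s)) * (1 / (z + complex_of_real u)^2) \<partial>lborel)
       = 1 / ((z + complex_of_real s) * (z + complex_of_real t))"
proof -
  let ?f = "\<lambda>u::real. 1 / (z + complex_of_real u)^2"
  let ?F = "\<lambda>u::real. - inverse (z + complex_of_real u)"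
  have cont: "continuous_on {s..t} ?f"
    using nonzero_zt[OF z] by (intro continuous_intros) auto
  have I: "(\<integral>u. indicator {s..t} u *\<^sub>R ?f u \<partial>lborel) = ?F t - ?F s"
    using st by (intro integral_FTC_atLeastAtMost[OF _ der_inv[OF z] cont]) auto
  have "(\<integral>u. complex_of_real (indicator {s..t} u / (t - s)) * ?f u \<partial>lborel)
      = (\<integral>u. complex_of_real (1 / (t - s)) * (indicator {s..t} u *\<^sub>R ?f u) \<partial>lborel)"
    by (intro Bochner_Integration.integral_cong) (auto simp: scaleR_conv_of_real indicator_def)
  also have "\<dots> = complex_of_real (1 / (t - s)) * (?F t - ?F s)"
    by (simp only: integral_mult_right_zero I)
  also have "\<dots> = 1 / ((z + complex_of_real s) * (z + complex_of_real t))"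
  proof -
    have ts: "complex_of_real t - complex_of_real s \<noteq> 0" using st by simp
    have "?F t - ?F s = (complex_of_real t - complex_of_real s) / ((z + complex_of_real s) * (z + complex_of_real t))"
      using nonzero_zt[OF z, of s] nonzero_zt[OF z, of t] by (simp add: inverse_eq_divide divide_simps)
    then show ?thesis using ts by (simp add: of_real_divide of_real_diff)
  qed
  finally show ?thesis .
qed

lemma int_half_line:
  "(\<integral>\<^sup>+u. ennreal (1 / (1 + u)^2) * indicator {0..} u \<partial>lborel) = 1"
proof -
  have "(\<integral>\<^sup>+u. ennreal (1 / (1 + u)^2) * indicator {0..} u \<partial>lborel) = ennreal (0 - (- 1 / (1 + (0::real))))"
  proof (rule nn_integral_FTC_atLeast)
    show "(\<lambda>u::real. 1 / (1 + u)^2) \<in> borel_measurable borel" by measurable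
    show "DERIV (\<lambda>u. - 1 / (1 + u)) x :> 1 / (1 + x)^2" if "0 \<le> x" for x :: real
      using that by (auto intro!: derivative_eq_intros simp: power2_eq_square)
    show "0 \<le> 1 / (1 + x)^2" for x :: real by simp
    show "((\<lambda>u::real. - 1 / (1 + u)) \<longlongrightarrow> 0) at_top"
      by real_asymp
  qed
  then show ?thesis by simp
qed

lemma int_w2_finite: "(\<integral>\<^sup>+u. ennreal (1 / (1 + \<bar>u\<bar>)^2) \<partial>lborel) < \<infinity>"
proof -
  define g where "g u = ennreal (1 / (1 + u)^2) * indicator {0..} u" for u :: real
  have gm: "g \<in> borel_measurable borel" unfolding g_def by measurable
  have le: "ennreal (1 / (1 + \<bar>u\<bar>)^2) \<le> g u + g (- u)" for u
    by (cases "0 \<le> u") (auto simp: g_def indicator_def)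
  have "(\<integral>\<^sup>+u. ennreal (1 / (1 + \<bar>u\<bar>)^2) \<partial>lborel) \<le> (\<integral>\<^sup>+u. g u + g (- u) \<partial>lborel)"
    by (intro nn_integral_mono le)
  also have "\<dots> = (\<integral>\<^sup>+u. g u \<partial>lborel) + (\<integral>\<^sup>+u. g (- u) \<partial>lborel)"
    using gm by (intro nn_integral_add) auto
  also have "(\<integral>\<^sup>+u. g (- u) \<partial>lborel) = (\<integral>\<^sup>+u. g u \<partial>lborel)"
    using nn_integral_real_affine[OF gm, of "-1" 0] by simp
  also have "(\<integral>\<^sup>+u. g u \<partial>lborel) = 1"
    unfolding g_def by (rule int_half_line)
  finally show ?thesis by (simp add: le_less_trans)
qed

lemma int_inv_sq:
  assumes M: "0 < M"
  shows "(\<integral>\<^sup>+v. ennreal (1 / v^2) * indicator {M..} v \<partial>lborel) = ennreal (1 / M)"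
proof -
  have "(\<integral>\<^sup>+v. ennreal (1 / v^2) * indicator {M..} v \<partial>lborel) = ennreal (0 - (- 1 / M))"
  proof (rule nn_integral_FTC_atLeast)
    show "(\<lambda>v::real. 1 / v^2) \<in> borel_measurable borel" by measurable
    show "DERIV (\<lambda>v. - 1 / v) x :> 1 / x^2" if "M \<le> x" for x :: real
      using that M by (auto intro!: derivative_eq_intros simp: power2_eq_square)
    show "0 \<le> 1 / x^2" for x :: real by simp
    show "((\<lambda>v::real. - 1 / v) \<longlongrightarrow> 0) at_top"
      by real_asymp
  qed
  then show ?thesis by simp
qed

lemma meas_k:
  "(\<lambda>x. (if snd (fst x) < a \<and> a < fst (fst x) \<and> snd (fst x) \<le> snd x \<and> snd x \<le> fst (fst x)
          then 1 / (fst (fst x) - snd (fst x)) else 0 :: real)) \<in> borel_measurable ((borel \<Otimes>\<^sub>M borel) \<Otimes>\<^sub>M borel)"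
  by measurable

lemma meas_k':
  "(\<lambda>x. (if snd (snd x) < a \<and> a < fst (snd x) \<and> snd (snd x) \<le> fst x \<and> fst x \<le> fst (snd x)
          then 1 / (fst (snd x) - snd (snd x)) else 0 :: real)) \<in> borel_measurable (borel \<Otimes>\<^sub>M (borel \<Otimes>\<^sub>M borel))"
  by measurable

lemma meas_h:
  "(\<lambda>x. (if snd x < a \<and> a < fst x then 1 / (fst x - snd x) else 0 :: real)) \<in> borel_measurable (borel \<Otimes>\<^sub>M borel)"
  by measurable

lemma meas_c2: "(\<lambda>u::real. 1 / (z + complex_of_real u)^2) \<in> borel_measurable borel"
  by measurable

lemma dir1:
  assumes M1: "Mplus 1 \<mu>1" and M2: "Mplus 1 \<mu>2"
    and N1: "{a..} \<in> null_sets \<mu>1" and N2: "{..a} \<in> null_sets \<mu>2"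
    and fin: "(\<integral>\<^sup>+ t\<in>{a<..}. (\<integral>\<^sup>+ s\<in>{..<a}. ennreal (1 / (t - s)) \<partial>\<mu>1) \<partial>\<mu>2) < \<infinity>"
  shows "\<exists>\<mu>. Mplus 2 \<mu> \<and> (\<forall>z. Im z > 0 \<longrightarrow> cauchy_tr 1 \<mu>1 z * cauchy_tr 1 \<mu>2 z = cauchy_tr 2 \<mu> z)"
proof -
  interpret S1: sigma_finite_measure \<mu>1 by (rule Mplus_sigma_finite[OF M1]) simp
  interpret S2: sigma_finite_measure \<mu>2 by (rule Mplus_sigma_finite[OF M2]) simp
  interpret P: pair_sigma_finite \<mu>2 \<mu>1 ..
  define X where "X = \<mu>2 \<Otimes>\<^sub>M \<mu>1"
  have sets1: "sets \<mu>1 = sets borel" by (rule Mplus_sets[OF M1])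
  have sets2: "sets \<mu>2 = sets borel" by (rule Mplus_sets[OF M2])
  have sX: "sets X = sets (borel \<Otimes>\<^sub>M borel)" unfolding X_def by (rule sets_pair_measure_cong[OF sets2 sets1])
  interpret SX: sigma_finite_measure X unfolding X_def by (intro sigma_finite_pair_measure) unfold_locales
  interpret PX: pair_sigma_finite X lborel ..
  have sXL: "sets (X \<Otimes>\<^sub>M lborel) = sets ((borel \<Otimes>\<^sub>M borel) \<Otimes>\<^sub>M borel)"
    using sX by (rule sets_pair_measure_cong) simp
  have sLX: "sets (lborel \<Otimes>\<^sub>M X) = sets (borel \<Otimes>\<^sub>M (borel \<Otimes>\<^sub>M borel))"
    using sX by (intro sets_pair_measure_cong) simp_all
  have mX: "f \<in> borel_measurable X" if "f \<in> borel_measurable (borel \<Otimes>\<^sub>M borel)" for f :: "real \<times> real \<Rightarrow> 'c::topological_space"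
    using that by (simp only: measurable_cong_sets[OF sX refl])
  have mXL: "f \<in> borel_measurable (X \<Otimes>\<^sub>M lborel)" if "f \<in> borel_measurable ((borel \<Otimes>\<^sub>M borel) \<Otimes>\<^sub>M borel)" for f :: "(real \<times> real) \<times> real \<Rightarrow> 'c::topological_space"
    using that by (simp only: measurable_cong_sets[OF sXL refl])
  have mLX: "f \<in> borel_measurable (lborel \<Otimes>\<^sub>M X)" if "f \<in> borel_measurable (borel \<Otimes>\<^sub>M (borel \<Otimes>\<^sub>M borel))" for f :: "real \<times> (real \<times> real) \<Rightarrow> 'c::topological_space"
    using that by (simp only: measurable_cong_sets[OF sLX refl])

  define h where "h t s = (if s < a \<and> a < t then 1 / (t - s) else 0 :: real)" for t s
  define k where "k t s u = (if s < a \<and> a < t \<and> s \<le> u \<and> u \<le> t then 1 / (t - s) else 0 :: real)" for t s u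
  have h_nn: "0 \<le> h t s" for t s by (simp add: h_def)
  have k_nn: "0 \<le> k t s u" for t s u by (simp add: k_def)
  have k_le: "k t s u \<le> h t s" for t s u by (simp add: k_def h_def)
  have mh: "(\<lambda>p. h (fst p) (snd p)) \<in> borel_measurable (borel \<Otimes>\<^sub>M borel)"
    unfolding h_def by (rule meas_h)
  have mk: "(\<lambda>x. k (fst (fst x)) (snd (fst x)) (snd x)) \<in> borel_measurable ((borel \<Otimes>\<^sub>M borel) \<Otimes>\<^sub>M borel)"
    unfolding k_def by (rule meas_k)
  have mk': "(\<lambda>x. k (fst (snd x)) (snd (snd x)) (fst x)) \<in> borel_measurable (borel \<Otimes>\<^sub>M (borel \<Otimes>\<^sub>M borel))"
    unfolding k_def by (rule meas_k')
  have mku: "(\<lambda>p. k (fst p) (snd p) u) \<in> borel_measurable (borel \<Otimes>\<^sub>M borel)" for u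
    unfolding k_def by measurable

  define Dv where "Dv = (\<integral>\<^sup>+ t. (\<integral>\<^sup>+ s. ennreal (h t s) \<partial>\<mu>1) \<partial>\<mu>2)"
  have D_eq: "(\<integral>\<^sup>+ t\<in>{a<..}. (\<integral>\<^sup>+ s\<in>{..<a}. ennreal (1 / (t - s)) \<partial>\<mu>1) \<partial>\<mu>2) = Dv"
    unfolding Dv_def
  proof (intro nn_integral_cong)
    fix t
    show "(\<integral>\<^sup>+ s\<in>{..<a}. ennreal (1 / (t - s)) \<partial>\<mu>1) * indicator {a<..} t = (\<integral>\<^sup>+ s. ennreal (h t s) \<partial>\<mu>1)"
    proof (cases "a < t")
      case True
      then show ?thesis by (auto simp: h_def indicator_def intro!: nn_integral_cong)
    next
      case False then show ?thesis by (simp add: h_def)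
    qed
  qed
  have DvX: "Dv = (\<integral>\<^sup>+ p. ennreal (h (fst p) (snd p)) \<partial>X)"
    unfolding Dv_def X_def using S1.nn_integral_fst[of "\<lambda>p. ennreal (h (fst p) (snd p))" \<mu>2]
    using mX[OF mh] unfolding X_def by simp
  have Dfin: "Dv < \<infinity>" using fin D_eq by simp
  define F where "F u = (\<integral>p. k (fst p) (snd p) u \<partial>X)" for u
  have kX_le: "(\<integral>\<^sup>+ p. ennreal (k (fst p) (snd p) u) \<partial>X) \<le> Dv" for u
    unfolding DvX by (intro nn_integral_mono) (simp add: k_le ennreal_leI)
  have int_k: "integrable X (\<lambda>p. k (fst p) (snd p) u)" for u
  proof -
    have "(\<integral>\<^sup>+ p. ennreal (norm (k (fst p) (snd p) u)) \<partial>X) < \<infinity>"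
      using kX_le[of u] Dfin k_nn by (simp add: le_less_trans)
    then show ?thesis using mX[OF mku] by (simp add: integrable_iff_bounded)
  qed
  have eF: "ennreal (F u) = (\<integral>\<^sup>+ p. ennreal (k (fst p) (snd p) u) \<partial>X)" for u
    unfolding F_def by (rule nn_integral_eq_integral[OF int_k, symmetric]) (simp add: k_nn)
  have F_nn: "0 \<le> F u" for u unfolding F_def by (intro Bochner_Integration.integral_nonneg) (simp add: k_nn)
  have mF: "F \<in> borel_measurable borel"
  proof -
    have "(\<lambda>u. \<integral>p. k (fst p) (snd p) u \<partial>X) \<in> borel_measurable lborel"
      using mLX[OF mk'] by (intro SX.borel_measurable_lebesgue_integral) simp
    then show ?thesis unfolding F_def by simp
  qed
  define \<mu> where "\<mu> = density lborel (\<lambda>u. ennreal (F u))"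
  define w where "w u = 1 / (1 + \<bar>u\<bar>)^2" for u :: real
  have w_nn: "0 \<le> w u" for u by (simp add: w_def)
  have mw: "w \<in> borel_measurable borel" unfolding w_def by measurable
  define Q where "Q = (\<integral>\<^sup>+ u. ennreal (w u) \<partial>lborel)"
  have Qfin: "Q < \<infinity>" unfolding Q_def w_def by (rule int_w2_finite)
  have mkw: "(\<lambda>x. ennreal (k (fst (fst x)) (snd (fst x)) (snd x)) * ennreal (w (snd x))) \<in> borel_measurable (X \<Otimes>\<^sub>M lborel)"
    unfolding k_def w_def by (intro mXL) measurable
  have G: "(\<integral>\<^sup>+ p. (\<integral>\<^sup>+ u. ennreal (k (fst p) (snd p) u) * ennreal (w u) \<partial>lborel) \<partial>X) \<le> Dv * Q"
  proof -
    have "(\<integral>\<^sup>+ p. (\<integral>\<^sup>+ u. ennreal (k (fst p) (snd p) u) * ennreal (w u) \<partial>lborel) \<partial>X)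
        \<le> (\<integral>\<^sup>+ p. (\<integral>\<^sup>+ u. ennreal (h (fst p) (snd p)) * ennreal (w u) \<partial>lborel) \<partial>X)"
      by (intro nn_integral_mono mult_right_mono) (simp_all add: k_le ennreal_leI)
    also have "\<dots> = (\<integral>\<^sup>+ p. ennreal (h (fst p) (snd p)) * Q \<partial>X)"
      unfolding Q_def using mw by (intro nn_integral_cong nn_integral_cmult) simp
    also have "\<dots> = Dv * Q"
      unfolding DvX using mX[OF mh] by (intro nn_integral_multc) simp
    finally show ?thesis .
  qed
  have GQ: "Dv * Q < \<infinity>" using Dfin Qfin by (simp add: ennreal_mult_less_top)
  have Mp: "Mplus 2 \<mu>"
  proof -
    have "sets \<mu> = sets borel" unfolding \<mu>_def by simp
    moreover have "(\<integral>\<^sup>+ t. ennreal ((1 + \<bar>t\<bar>) powr (- 2)) \<partial>\<mu>) < \<infinity>"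
    proof -
      have "(\<integral>\<^sup>+ t. ennreal ((1 + \<bar>t\<bar>) powr (- 2)) \<partial>\<mu>) = (\<integral>\<^sup>+ u. ennreal (F u) * ennreal (w u) \<partial>lborel)"
        unfolding \<mu>_def using mF mw by (subst nn_integral_density) (simp_all add: w2 w_def)
      also have "\<dots> = (\<integral>\<^sup>+ u. (\<integral>\<^sup>+ p. ennreal (k (fst p) (snd p) u) * ennreal (w u) \<partial>X) \<partial>lborel)"
        unfolding eF using mX[OF mku] by (intro nn_integral_cong nn_integral_multc[symmetric]) simp
      also have "\<dots> = (\<integral>\<^sup>+ p. (\<integral>\<^sup>+ u. ennreal (k (fst p) (snd p) u) * ennreal (w u) \<partial>lborel) \<partial>X)"
        using PX.Fubini[OF mkw] by simp
      also have "\<dots> < \<infinity>" using G GQ by (rule le_less_trans)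
      finally show ?thesis .
    qed
    ultimately show ?thesis unfolding Mplus_def by simp
  qed
  have AE1: "AE s in \<mu>1. s < a" using AE_not_in[OF N1] by auto
  have AE2: "AE t in \<mu>2. a < t" using AE_not_in[OF N2] by auto
  have ident: "cauchy_tr 1 \<mu>1 z * cauchy_tr 1 \<mu>2 z = cauchy_tr 2 \<mu> z" if z: "Im z > 0" for z
  proof -
    define c where "c u = 1 / (z + complex_of_real u)^2" for u :: real
    define Kc where "Kc p u = complex_of_real (k (fst p) (snd p) u) * c u" for p u
    define H where "H p = (if snd p < a \<and> a < fst p then 1 / ((z + complex_of_real (snd p)) * (z + complex_of_real (fst p))) else 0)" for p :: "real \<times> real"
    have mc: "c \<in> borel_measurable borel" unfolding c_def by (rule meas_c2)
    have mKc: "(\<lambda>x. Kc (fst x) (snd x)) \<in> borel_measurable (X \<Otimes>\<^sub>M lborel)"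
      unfolding Kc_def k_def c_def by (intro mXL) measurable
    have nKc: "ennreal (norm (Kc p u)) \<le> ennreal ((Kz z)^2) * (ennreal (k (fst p) (snd p) u) * ennreal (w u))" for p u
    proof -
      have "norm (Kc p u) = k (fst p) (snd p) u * norm (c u)" unfolding Kc_def by (simp add: norm_mult k_nn)
      also have "\<dots> \<le> k (fst p) (snd p) u * ((Kz z)^2 * w u)"
        unfolding c_def w_def using cauchy2_bound[OF z, of u] by (intro mult_left_mono k_nn) (simp_all add: w2)
      finally have "ennreal (norm (Kc p u)) \<le> ennreal ((Kz z)^2 * (k (fst p) (snd p) u * w u))"
        by (intro ennreal_leI) (simp add: algebra_simps)
      also have "\<dots> = ennreal ((Kz z)^2) * (ennreal (k (fst p) (snd p) u) * ennreal (w u))"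
        using k_nn w_nn by (simp add: ennreal_mult)
      finally show ?thesis .
    qed
    have mG: "(\<lambda>p. \<integral>\<^sup>+ u. ennreal (k (fst p) (snd p) u) * ennreal (w u) \<partial>lborel) \<in> borel_measurable X"
      using mkw by (intro lborel.borel_measurable_nn_integral) (simp add: split_beta')
    have int_Kc: "integrable (X \<Otimes>\<^sub>M lborel) (\<lambda>x. Kc (fst x) (snd x))"
    proof -
      have mn: "(\<lambda>x. ennreal (norm (Kc (fst x) (snd x)))) \<in> borel_measurable (X \<Otimes>\<^sub>M lborel)"
        by (intro measurable_compose[OF mKc]) measurable
      have "(\<integral>\<^sup>+ x. ennreal (norm (Kc (fst x) (snd x))) \<partial>(X \<Otimes>\<^sub>M lborel)) = (\<integral>\<^sup>+ p. \<integral>\<^sup>+ u. ennreal (norm (Kc p u)) \<partial>lborel \<partial>X)"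
        using lborel.nn_integral_fst[OF mn] by simp
      also have "\<dots> \<le> (\<integral>\<^sup>+ p. \<integral>\<^sup>+ u. ennreal ((Kz z)^2) * (ennreal (k (fst p) (snd p) u) * ennreal (w u)) \<partial>lborel \<partial>X)"
        by (intro nn_integral_mono nKc)
      also have "\<dots> = (\<integral>\<^sup>+ p. ennreal ((Kz z)^2) * (\<integral>\<^sup>+ u. ennreal (k (fst p) (snd p) u) * ennreal (w u) \<partial>lborel) \<partial>X)"
        using mw by (intro nn_integral_cong nn_integral_cmult) (simp add: k_def)
      also have "\<dots> = ennreal ((Kz z)^2) * (\<integral>\<^sup>+ p. \<integral>\<^sup>+ u. ennreal (k (fst p) (snd p) u) * ennreal (w u) \<partial>lborel \<partial>X)"
        using mG by (rule nn_integral_cmult)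
      also have "\<dots> \<le> ennreal ((Kz z)^2) * (Dv * Q)"
        using G by (rule mult_left_mono) simp
      also have "\<dots> < \<infinity>" using GQ by (simp add: ennreal_mult_less_top)
      finally show ?thesis using mKc by (simp add: integrable_iff_bounded)
    qed
    have inner_u: "(\<integral> u. Kc p u \<partial>lborel) = H p" for p
    proof (cases "snd p < a \<and> a < fst p")
      case True
      have "(\<integral> u. Kc p u \<partial>lborel) = (\<integral>u. complex_of_real (indicator {snd p..fst p} u / (fst p - snd p)) * (1 / (z + complex_of_real u)^2) \<partial>lborel)"
        using True by (intro Bochner_Integration.integral_cong) (auto simp: Kc_def k_def c_def indicator_def)
      also have "\<dots> = 1 / ((z + complex_of_real (snd p)) * (z + complex_of_real (fst p)))"
        using True by (intro ftc_pair z) auto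
      finally show ?thesis using True by (simp add: H_def)
    next
      case False
      then have "\<And>u. Kc p u = 0" by (auto simp: Kc_def k_def)
      moreover have "H p = 0" using False unfolding H_def by (simp only: if_False)
      ultimately show ?thesis by simp
    qed
    have inner_X: "(\<integral> p. Kc p u \<partial>X) = F u *\<^sub>R c u" for u
    proof -
      have "(\<integral> p. Kc p u \<partial>X) = (\<integral> p. complex_of_real (k (fst p) (snd p) u) \<partial>X) * c u"
        unfolding Kc_def by (rule integral_mult_left_zero)
      also have "\<dots> = F u *\<^sub>R c u" unfolding F_def by (simp add: scaleR_conv_of_real)
      finally show ?thesis .
    qed
    have mH: "H \<in> borel_measurable X" unfolding H_def by (intro mX) measurable
    define n1 where "n1 s = norm (1 / (z + complex_of_real s))" for s :: real
    have n1m: "(\<lambda>s. ennreal (n1 s)) \<in> borel_measurable borel" unfolding n1_def by measurable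
    have int_H: "integrable X H"
    proof -
      have i1: "integrable \<mu>1 (\<lambda>s. 1 / (z + complex_of_real s))" by (rule integrable_cauchy1[OF M1 z])
      have i2: "integrable \<mu>2 (\<lambda>s. 1 / (z + complex_of_real s))" by (rule integrable_cauchy1[OF M2 z])
      have f1: "(\<integral>\<^sup>+ s. ennreal (n1 s) \<partial>\<mu>1) < \<infinity>" using i1 unfolding n1_def integrable_iff_bounded by blast
      have f2: "(\<integral>\<^sup>+ s. ennreal (n1 s) \<partial>\<mu>2) < \<infinity>" using i2 unfolding n1_def integrable_iff_bounded by blast
      have m1: "(\<lambda>s. ennreal (n1 s)) \<in> borel_measurable \<mu>1" by (rule Mplus_meas[OF M1 n1m])
      have m2: "(\<lambda>s. ennreal (n1 s)) \<in> borel_measurable \<mu>2" by (rule Mplus_meas[OF M2 n1m])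
      have "(\<lambda>p. ennreal (n1 (snd p)) * ennreal (n1 (fst p))) \<in> borel_measurable (borel \<Otimes>\<^sub>M borel)"
        unfolding n1_def by measurable
      then have m12: "(\<lambda>p. ennreal (n1 (snd p)) * ennreal (n1 (fst p))) \<in> borel_measurable (\<mu>2 \<Otimes>\<^sub>M \<mu>1)"
        using mX unfolding X_def by blast
      have pw: "ennreal (norm (H p)) \<le> ennreal (n1 (snd p)) * ennreal (n1 (fst p))" for p
      proof -
        have "norm (H p) \<le> n1 (snd p) * n1 (fst p)"
        proof (cases "snd p < a \<and> a < fst p")
          case True
          then have "H p = 1 / (z + complex_of_real (snd p)) * (1 / (z + complex_of_real (fst p)))"
            unfolding H_def by simp
          then have "norm (H p) = n1 (snd p) * n1 (fst p)" unfolding n1_def by (simp only: norm_mult)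
          then show ?thesis by simp
        next
          case False
          then have "H p = 0" unfolding H_def by (simp only: if_False)
          then show ?thesis unfolding n1_def by simp
        qed
        then have "ennreal (norm (H p)) \<le> ennreal (n1 (snd p) * n1 (fst p))" by (rule ennreal_leI)
        also have "\<dots> = ennreal (n1 (snd p)) * ennreal (n1 (fst p))" by (simp add: n1_def ennreal_mult)
        finally show ?thesis .
      qed
      have "(\<integral>\<^sup>+ p. ennreal (norm (H p)) \<partial>X) \<le> (\<integral>\<^sup>+ p. ennreal (n1 (snd p)) * ennreal (n1 (fst p)) \<partial>X)"
        by (intro nn_integral_mono pw)
      also have "\<dots> = (\<integral>\<^sup>+ t. \<integral>\<^sup>+ s. ennreal (n1 s) * ennreal (n1 t) \<partial>\<mu>1 \<partial>\<mu>2)"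
        unfolding X_def using S1.nn_integral_fst[OF m12] by simp
      also have "\<dots> = (\<integral>\<^sup>+ t. (\<integral>\<^sup>+ s. ennreal (n1 s) \<partial>\<mu>1) * ennreal (n1 t) \<partial>\<mu>2)"
        by (intro nn_integral_cong nn_integral_multc m1)
      also have "\<dots> = (\<integral>\<^sup>+ s. ennreal (n1 s) \<partial>\<mu>1) * (\<integral>\<^sup>+ t. ennreal (n1 t) \<partial>\<mu>2)"
        by (rule nn_integral_cmult[OF m2])
      also have "\<dots> < \<infinity>" using f1 f2 by (simp add: ennreal_mult_less_top)
      finally show ?thesis using mH by (simp add: integrable_iff_bounded)
    qed
    have inner_s: "(\<integral> s. H (t, s) \<partial>\<mu>1) = (if a < t then 1 / (z + complex_of_real t) * cauchy_tr 1 \<mu>1 z else 0)" for t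
    proof (cases "a < t")
      case True
      have "(\<integral> s. H (t, s) \<partial>\<mu>1) = (\<integral> s. 1 / (z + complex_of_real t) * (1 / (z + complex_of_real s)) \<partial>\<mu>1)"
      proof (rule integral_cong_AE)
        show "(\<lambda>s. H (t, s)) \<in> borel_measurable \<mu>1" unfolding H_def fst_conv snd_conv by (intro Mplus_meas[OF M1]) measurable
        show "(\<lambda>s. 1 / (z + complex_of_real t) * (1 / (z + complex_of_real s))) \<in> borel_measurable \<mu>1"
          by (intro Mplus_meas[OF M1]) measurable
        show "AE s in \<mu>1. H (t, s) = 1 / (z + complex_of_real t) * (1 / (z + complex_of_real s))"
          using AE1 by eventually_elim (use True in \<open>simp add: H_def mult.commute\<close>)
      qed
      also have "\<dots> = 1 / (z + complex_of_real t) * cauchy_tr 1 \<mu>1 z" unfolding cauchy_tr_def power_one_right by (rule integral_mult_right_zero)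
      finally show ?thesis using True by simp
    next
      case False then show ?thesis by (simp add: H_def)
    qed
    have "cauchy_tr 2 \<mu> z = (\<integral> u. c u \<partial>\<mu>)" unfolding cauchy_tr_def c_def ..
    also have "\<dots> = (\<integral> u. F u *\<^sub>R c u \<partial>lborel)"
      unfolding \<mu>_def using mc mF F_nn by (intro integral_density) auto
    also have "\<dots> = (\<integral> u. (\<integral> p. Kc p u \<partial>X) \<partial>lborel)" by (simp add: inner_X)
    also have "\<dots> = (\<integral> p. (\<integral> u. Kc p u \<partial>lborel) \<partial>X)"
      using int_Kc by (intro PX.Fubini_integral) (simp add: split_beta')
    also have "\<dots> = (\<integral> p. H p \<partial>X)" by (simp add: inner_u)
    also have "\<dots> = (\<integral> t. (\<integral> s. H (t, s) \<partial>\<mu>1) \<partial>\<mu>2)"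
      using P.integral_fst'[of H] int_H unfolding X_def by simp
    also have "\<dots> = (\<integral> t. (if a < t then 1 / (z + complex_of_real t) * cauchy_tr 1 \<mu>1 z else 0) \<partial>\<mu>2)"
      by (simp add: inner_s)
    also have "\<dots> = (\<integral> t. cauchy_tr 1 \<mu>1 z * (1 / (z + complex_of_real t)) \<partial>\<mu>2)"
    proof (rule integral_cong_AE)
      show "(\<lambda>t. if a < t then 1 / (z + complex_of_real t) * cauchy_tr 1 \<mu>1 z else 0) \<in> borel_measurable \<mu>2"
        by (intro Mplus_meas[OF M2]) measurable
      show "(\<lambda>t. cauchy_tr 1 \<mu>1 z * (1 / (z + complex_of_real t))) \<in> borel_measurable \<mu>2"
        by (intro Mplus_meas[OF M2]) measurable
      show "AE t in \<mu>2. (if a < t then 1 / (z + complex_of_real t) * cauchy_tr 1 \<mu>1 z else 0) = cauchy_tr 1 \<mu>1 z * (1 / (z + complex_of_real t))"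
        using AE2 by eventually_elim simp
    qed
    also have "\<dots> = cauchy_tr 1 \<mu>1 z * cauchy_tr 1 \<mu>2 z"
      by (subst integral_mult_right_zero) (simp only: cauchy_tr_def power_one_right)
    finally show ?thesis ..
  qed
  show ?thesis using Mp ident by blast
qed

lemma re_inv: "v > 0 \<Longrightarrow> Re (1 / Complex x v) = x / (x^2 + v^2)"
  by (simp add: Re_divide power2_eq_square)
lemma im_inv: "v > 0 \<Longrightarrow> Im (1 / Complex x v) = - v / (x^2 + v^2)"
  by (simp add: Im_divide power2_eq_square)
lemma csq: "(Complex x v)^2 = Complex (x^2 - v^2) (2 * x * v)"
  by (simp add: power2_eq_square complex_eq_iff algebra_simps)
lemma re_inv_sq: assumes "v > 0" shows "Re (1 / (Complex x v)^2) = (x^2 - v^2) / (x^2 + v^2)^2"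
proof -
  have "(x^2 - v^2)^2 + (2 * x * v)^2 = (x^2 + v^2)^2" by (simp add: power2_eq_square algebra_simps)
  then show ?thesis unfolding csq by (simp add: Re_divide)
qed
lemma zv: "Complex (- a) v + complex_of_real s = Complex (s - a) v"
  by (simp add: complex_eq_iff)
lemma w_bound: "1 / (1 + (t - a)^2) \<le> (2 * (1 + \<bar>a\<bar>)^2) * (1 + \<bar>t::real\<bar>) powr (- 2)"
proof -
  have p: "(1 + \<bar>t\<bar>) powr (- 2) = 1 / (1 + \<bar>t\<bar>)^2" by (simp add: powr_minus_divide powr_numeral)
  have t1: "\<bar>t\<bar> \<le> \<bar>a\<bar> + \<bar>t - a\<bar>" by arith
  have t2: "(1 + \<bar>a\<bar>) * (1 + \<bar>t - a\<bar>) = 1 + \<bar>a\<bar> + \<bar>t - a\<bar> + \<bar>a\<bar> * \<bar>t - a\<bar>" by (simp add: algebra_simps)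
  have t3: "0 \<le> \<bar>a\<bar> * \<bar>t - a\<bar>" by simp
  have a1: "1 + \<bar>t\<bar> \<le> (1 + \<bar>a\<bar>) * (1 + \<bar>t - a\<bar>)" using t1 t2 t3 by linarith
  have q: "0 \<le> (1 - \<bar>t - a\<bar>)^2" by simp
  have a2: "(1 + \<bar>t - a\<bar>)^2 \<le> 2 * (1 + (t - a)^2)"
  proof -
    have e: "2 * (1 + \<bar>t - a\<bar>^2) - (1 + \<bar>t - a\<bar>)^2 = (1 - \<bar>t - a\<bar>)^2" by (simp add: power2_eq_square algebra_simps)
    have "(1 + \<bar>t - a\<bar>)^2 \<le> 2 * (1 + \<bar>t - a\<bar>^2)" using e q by linarith
    then show ?thesis by simp
  qed
  have "(1 + \<bar>t\<bar>)^2 \<le> ((1 + \<bar>a\<bar>) * (1 + \<bar>t - a\<bar>))^2" using a1 by (intro power_mono) auto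
  also have "\<dots> = (1 + \<bar>a\<bar>)^2 * (1 + \<bar>t - a\<bar>)^2" by (simp add: power_mult_distrib)
  also have "\<dots> \<le> (1 + \<bar>a\<bar>)^2 * (2 * (1 + (t - a)^2))" using a2 by (intro mult_left_mono) auto
  finally have b: "(1 + \<bar>t\<bar>)^2 \<le> (2 * (1 + \<bar>a\<bar>)^2) * (1 + (t - a)^2)" by (simp add: algebra_simps)
  have pos1: "0 < 1 + (t - a)^2" by (simp add: add_pos_nonneg)
  have pos2: "0 < (1 + \<bar>t\<bar>)^2" by simp
  have "1 / (1 + (t - a)^2) \<le> (2 * (1 + \<bar>a\<bar>)^2) / (1 + \<bar>t\<bar>)^2"
    using b pos1 pos2 by (simp add: divide_simps mult.commute)
  then show ?thesis unfolding p by simp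
qed

definition al1 :: "real \<Rightarrow> real \<Rightarrow> real \<Rightarrow> real" where
  "al1 a v s = (if s < a then (a - s) / ((s - a)^2 + v^2) else 0)"
definition al2 :: "real \<Rightarrow> real \<Rightarrow> real \<Rightarrow> real" where
  "al2 a v s = (if s < a then v / ((s - a)^2 + v^2) else 0)"
definition be1 :: "real \<Rightarrow> real \<Rightarrow> real \<Rightarrow> real" where
  "be1 a v t = (if a < t then (t - a) / ((t - a)^2 + v^2) else 0)"
definition be2 :: "real \<Rightarrow> real \<Rightarrow> real \<Rightarrow> real" where
  "be2 a v t = (if a < t then v / ((t - a)^2 + v^2) else 0)"
definition psi :: "real \<Rightarrow> real \<Rightarrow> real \<Rightarrow> real" where
  "psi a v t = (v^2 - (t - a)^2) / ((t - a)^2 + v^2)^2"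

lemma prod_formula:
  assumes M1: "Mplus 1 \<mu>1" and M2: "Mplus 1 \<mu>2" and Mp: "Mplus 2 \<mu>"
    and AE1: "AE s in \<mu>1. s < a" and AE2: "AE t in \<mu>2. a < t"
    and idz: "cauchy_tr 1 \<mu>1 (Complex (- a) v) * cauchy_tr 1 \<mu>2 (Complex (- a) v) = cauchy_tr 2 \<mu> (Complex (- a) v)"
    and v: "0 < v"
  shows "(\<integral> t. psi a v t \<partial>\<mu>) = (\<integral> s. al1 a v s \<partial>\<mu>1) * (\<integral> t. be1 a v t \<partial>\<mu>2) + (\<integral> s. al2 a v s \<partial>\<mu>1) * (\<integral> t. be2 a v t \<partial>\<mu>2)"
proof -
  define z where "z = Complex (- a) v"
  have z: "Im z > 0" using v by (simp add: z_def)
  have zt: "z + complex_of_real t = Complex (t - a) v" for t unfolding z_def by (rule zv)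
  define A where "A = cauchy_tr 1 \<mu>1 z"
  define B where "B = cauchy_tr 1 \<mu>2 z"
  have i1: "integrable \<mu>1 (\<lambda>s. 1 / (z + complex_of_real s))" by (rule integrable_cauchy1[OF M1 z])
  have i2: "integrable \<mu>2 (\<lambda>s. 1 / (z + complex_of_real s))" by (rule integrable_cauchy1[OF M2 z])
  have i3: "integrable \<mu> (\<lambda>s. 1 / (z + complex_of_real s)^2)" by (rule integrable_cauchy2[OF Mp z])
  have ReC2: "Re (cauchy_tr 2 \<mu> z) = - (\<integral> t. psi a v t \<partial>\<mu>)"
  proof -
    have "Re (cauchy_tr 2 \<mu> z) = (\<integral> t. Re (1 / (z + complex_of_real t)^2) \<partial>\<mu>)"
      unfolding cauchy_tr_def using i3 by (rule integral_Re[symmetric])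
    also have "\<dots> = (\<integral> t. - psi a v t \<partial>\<mu>)"
      by (intro Bochner_Integration.integral_cong refl) (simp add: zt re_inv_sq[OF v] psi_def minus_divide_left)
    also have "\<dots> = - (\<integral> t. psi a v t \<partial>\<mu>)" by (rule integral_minus)
    finally show ?thesis .
  qed
  have ReA: "Re A = - (\<integral> s. al1 a v s \<partial>\<mu>1)"
  proof -
    have "Re A = (\<integral> s. Re (1 / (z + complex_of_real s)) \<partial>\<mu>1)"
      unfolding A_def cauchy_tr_def power_one_right using i1 by (rule integral_Re[symmetric])
    also have "\<dots> = (\<integral> s. - al1 a v s \<partial>\<mu>1)"
    proof (rule integral_cong_AE)
      show "(\<lambda>s. Re (1 / (z + complex_of_real s))) \<in> borel_measurable \<mu>1" by (intro Mplus_meas[OF M1]) measurable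
      show "(\<lambda>s. - al1 a v s) \<in> borel_measurable \<mu>1" unfolding al1_def by (intro Mplus_meas[OF M1]) measurable
      show "AE s in \<mu>1. Re (1 / (z + complex_of_real s)) = - al1 a v s"
        using AE1 by eventually_elim (simp add: zt re_inv[OF v] al1_def minus_divide_left)
    qed
    also have "\<dots> = - (\<integral> s. al1 a v s \<partial>\<mu>1)" by (rule integral_minus)
    finally show ?thesis .
  qed
  have ImA: "Im A = - (\<integral> s. al2 a v s \<partial>\<mu>1)"
  proof -
    have "Im A = (\<integral> s. Im (1 / (z + complex_of_real s)) \<partial>\<mu>1)"
      unfolding A_def cauchy_tr_def power_one_right using i1 by (rule integral_Im[symmetric])
    also have "\<dots> = (\<integral> s. - al2 a v s \<partial>\<mu>1)"
    proof (rule integral_cong_AE)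
      show "(\<lambda>s. Im (1 / (z + complex_of_real s))) \<in> borel_measurable \<mu>1" by (intro Mplus_meas[OF M1]) measurable
      show "(\<lambda>s. - al2 a v s) \<in> borel_measurable \<mu>1" unfolding al2_def by (intro Mplus_meas[OF M1]) measurable
      show "AE s in \<mu>1. Im (1 / (z + complex_of_real s)) = - al2 a v s"
        using AE1 by eventually_elim (simp add: zt im_inv[OF v] al2_def)
    qed
    also have "\<dots> = - (\<integral> s. al2 a v s \<partial>\<mu>1)" by (rule integral_minus)
    finally show ?thesis .
  qed
  have ReB: "Re B = (\<integral> t. be1 a v t \<partial>\<mu>2)"
  proof -
    have "Re B = (\<integral> t. Re (1 / (z + complex_of_real t)) \<partial>\<mu>2)"
      unfolding B_def cauchy_tr_def power_one_right using i2 by (rule integral_Re[symmetric])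
    also have "\<dots> = (\<integral> t. be1 a v t \<partial>\<mu>2)"
    proof (rule integral_cong_AE)
      show "(\<lambda>s. Re (1 / (z + complex_of_real s))) \<in> borel_measurable \<mu>2" by (intro Mplus_meas[OF M2]) measurable
      show "(\<lambda>s. be1 a v s) \<in> borel_measurable \<mu>2" unfolding be1_def by (intro Mplus_meas[OF M2]) measurable
      show "AE s in \<mu>2. Re (1 / (z + complex_of_real s)) = be1 a v s"
        using AE2 by eventually_elim (simp add: zt re_inv[OF v] be1_def)
    qed
    finally show ?thesis .
  qed
  have ImB: "Im B = - (\<integral> t. be2 a v t \<partial>\<mu>2)"
  proof -
    have "Im B = (\<integral> t. Im (1 / (z + complex_of_real t)) \<partial>\<mu>2)"
      unfolding B_def cauchy_tr_def power_one_right using i2 by (rule integral_Im[symmetric])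
    also have "\<dots> = (\<integral> t. - be2 a v t \<partial>\<mu>2)"
    proof (rule integral_cong_AE)
      show "(\<lambda>s. Im (1 / (z + complex_of_real s))) \<in> borel_measurable \<mu>2" by (intro Mplus_meas[OF M2]) measurable
      show "(\<lambda>s. - be2 a v s) \<in> borel_measurable \<mu>2" unfolding be2_def by (intro Mplus_meas[OF M2]) measurable
      show "AE s in \<mu>2. Im (1 / (z + complex_of_real s)) = - be2 a v s"
        using AE2 by eventually_elim (simp add: zt im_inv[OF v] be2_def)
    qed
    also have "\<dots> = - (\<integral> t. be2 a v t \<partial>\<mu>2)" by (rule integral_minus)
    finally show ?thesis .
  qed
  have "(\<integral> t. psi a v t \<partial>\<mu>) = - Re (cauchy_tr 2 \<mu> z)" using ReC2 by simp
  also have "\<dots> = - Re (A * B)" using idz unfolding A_def B_def z_def by simp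
  also have "\<dots> = - (Re A * Re B - Im A * Im B)" by simp
  finally show ?thesis unfolding ReA ImA ReB ImB by (simp add: algebra_simps)
qed

lemma nn_sup_bound:
  fixes f :: "real \<Rightarrow> ennreal"
  assumes f: "f \<in> borel_measurable borel"
    and b: "\<And>n::nat. (\<integral>\<^sup>+ v. f v * indicator {1..1 + real n} v \<partial>lborel) \<le> B"
  shows "(\<integral>\<^sup>+ v. f v * indicator {1..} v \<partial>lborel) \<le> B"
proof -
  let ?g = "\<lambda>(n::nat) v. f v * indicator {1..1 + real n} v"
  have ind_le: "(indicator {1..1 + real m} v :: ennreal) \<le> indicator {1..1 + real n} v" if "m \<le> n" for m n v
    using that by (simp add: indicator_def)
  have ind_le2: "(indicator {1..1 + real n} v :: ennreal) \<le> indicator {1..} v" for n v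
    by (simp add: indicator_def)
  have sup: "(SUP n. ?g n v) = f v * indicator {1..} v" for v
  proof (rule antisym)
    show "(SUP n. ?g n v) \<le> f v * indicator {1..} v"
    proof (rule SUP_least)
      fix n show "?g n v \<le> f v * indicator {1..} v" by (intro mult_left_mono ind_le2) simp
    qed
    show "f v * indicator {1..} v \<le> (SUP n. ?g n v)"
    proof (cases "1 \<le> v")
      case True
      obtain n :: nat where n: "v - 1 \<le> real n" using real_arch_simple by blast
      have "indicator {1..1 + real n} v = (indicator {1..} v :: ennreal)" using True n by (simp add: indicator_def)
      then have e: "?g n v = f v * indicator {1..} v" by simp
      have "?g n v \<le> (SUP n. ?g n v)" by (rule SUP_upper) simp
      then show ?thesis by (simp only: e)
    next
      case False then show ?thesis by (simp add: indicator_def)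
    qed
  qed
  have inc: "incseq ?g"
    unfolding incseq_def le_fun_def
  proof (intro allI impI)
    fix m n :: nat and v :: real assume "m \<le> n"
    then show "?g m v \<le> ?g n v" by (intro mult_left_mono ind_le) simp_all
  qed
  have mg: "?g n \<in> borel_measurable lborel" for n using f by simp
  have "(\<integral>\<^sup>+ v. f v * indicator {1..} v \<partial>lborel) = (\<integral>\<^sup>+ v. (SUP n. ?g n v) \<partial>lborel)"
    by (simp only: sup)
  also have "\<dots> = (SUP n. \<integral>\<^sup>+ v. ?g n v \<partial>lborel)"
    by (rule nn_integral_monotone_convergence_SUP[OF inc mg])
  also have "\<dots> \<le> B" by (intro SUP_least b)
  finally show ?thesis .
qed

lemma psi_abs: "1 \<le> v \<Longrightarrow> \<bar>psi a v t\<bar> \<le> 1 / (1 + (t - a)^2)"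
proof -
  assume v: "1 \<le> v"
  let ?w = "(t - a)^2"
  have pos: "0 < ?w + v^2" using v by (simp add: add_nonneg_pos)
  have "\<bar>v^2 - ?w\<bar> \<le> ?w + v^2" using zero_le_power2[of v] zero_le_power2[of "t - a"] by arith
  then have "\<bar>psi a v t\<bar> \<le> (?w + v^2) / (?w + v^2)^2"
    unfolding psi_def abs_divide abs_power2 by (intro divide_right_mono) simp_all
  also have "\<dots> = 1 / (?w + v^2)" using pos by (simp add: power2_eq_square)
  also have "\<dots> \<le> 1 / (1 + ?w)"
  proof (rule divide_left_mono)
    show "1 + ?w \<le> ?w + v^2" using v one_le_power[of v 2] by simp
    show "0 < (?w + v^2) * (1 + ?w)" using pos by (intro mult_pos_pos) (simp_all add: add_pos_nonneg)
  qed simp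
  finally show ?thesis .
qed

lemma der_aux:
  fixes W x :: real
  assumes "0 < W + x^2"
  shows "((\<lambda>v. - v / (W + v^2)) has_real_derivative (x^2 - W) / (W + x^2)^2) (at x)"
proof -
  have nz: "W + x^2 \<noteq> 0" using assms by simp
  have "((\<lambda>v. - v / (W + v^2)) has_real_derivative - ((1 * (W + x^2) - x * (2 * x)) / (W + x^2)^2)) (at x)"
    using nz by (auto intro!: derivative_eq_intros DERIV_divide simp: power2_eq_square)
  moreover have "- ((1 * (W + x^2) - x * (2 * x)) / (W + x^2)^2) = (x^2 - W) / (W + x^2)^2"
  proof -
    have "1 * (W + x^2) - x * (2 * x) = - (x^2 - W)" by (simp add: power2_eq_square)
    then show ?thesis by (simp only: minus_divide_left minus_minus)
  qed
  ultimately show ?thesis by simp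
qed

lemma psi_FTC:
  assumes y: "1 \<le> y"
  shows "(\<integral> v. indicator {1..y} v * psi a v t \<partial>lborel) = 1 / (1 + (t - a)^2) - y / ((t - a)^2 + y^2)"
proof -
  let ?w = "(t - a)^2"
  let ?F = "\<lambda>v. - v / (?w + v^2)"
  have der: "(?F has_vector_derivative psi a x t) (at x within {1..y})" if "1 \<le> x" for x
  proof -
    have pos: "0 < ?w + x^2" using that by (simp add: add_nonneg_pos)
    have "(?F has_real_derivative psi a x t) (at x)"
      using der_aux[OF pos] unfolding psi_def by (simp add: add.commute)
    then show ?thesis by (simp add: has_real_derivative_iff_has_vector_derivative has_vector_derivative_at_within)
  qed
  have cont: "continuous_on {1..y} (\<lambda>v. psi a v t)"
    unfolding psi_def by (intro continuous_intros) (auto simp: add_nonneg_pos)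
  have "(\<integral> v. indicator {1..y} v *\<^sub>R psi a v t \<partial>lborel) = ?F y - ?F 1"
    using y by (intro integral_FTC_atLeastAtMost[OF _ der cont]) auto
  then show ?thesis by (simp add: add.commute)
qed

lemma phi_bound:
  assumes Mp: "Mplus 2 \<mu>" and nn: "\<And>v. 0 < v \<Longrightarrow> 0 \<le> (\<integral> t. psi a v t \<partial>\<mu>)"
  shows "(\<integral>\<^sup>+ v. ennreal (\<integral> t. psi a v t \<partial>\<mu>) * indicator {1..} v \<partial>lborel)
           \<le> ennreal (\<integral> t. 1 / (1 + (t - a)^2) \<partial>\<mu>)"
proof -
  interpret Sm: sigma_finite_measure \<mu> by (rule Mplus_sigma_finite[OF Mp]) simp
  interpret PM: pair_sigma_finite \<mu> lborel ..
  have setsm: "sets \<mu> = sets borel" by (rule Mplus_sets[OF Mp])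
  have sML: "sets (\<mu> \<Otimes>\<^sub>M lborel) = sets (borel \<Otimes>\<^sub>M borel)" by (rule sets_pair_measure_cong[OF setsm]) simp
  have sLM: "sets (lborel \<Otimes>\<^sub>M \<mu>) = sets (borel \<Otimes>\<^sub>M borel)" by (rule sets_pair_measure_cong[OF _ setsm]) simp
  define \<Phi> where "\<Phi> v = (\<integral> t. psi a v t \<partial>\<mu>)" for v
  define q where "q t = 1 / (1 + (t - a)^2)" for t :: real
  have q_nn: "0 \<le> q t" for t unfolding q_def by (simp add: add_pos_nonneg)
  have mq: "q \<in> borel_measurable borel" unfolding q_def by measurable
  have int_q: "integrable \<mu> q"
  proof (rule Mplus_integrable[OF Mp mq, where C = "2 * (1 + \<bar>a\<bar>)^2"])
    fix t
    have "norm (q t) = q t" using q_nn[of t] by simp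
    then show "norm (q t) \<le> 2 * (1 + \<bar>a\<bar>)^2 * (1 + \<bar>t\<bar>) powr (- 2)"
      unfolding q_def using w_bound[of t a] by simp
  qed
  have qfin: "(\<integral>\<^sup>+ t. ennreal (q t) \<partial>\<mu>) < \<infinity>"
  proof -
    have "(\<integral>\<^sup>+ t. ennreal (norm (q t)) \<partial>\<mu>) < \<infinity>" using int_q unfolding integrable_iff_bounded by blast
    moreover have "(\<lambda>t. ennreal (norm (q t))) = (\<lambda>t. ennreal (q t))" using q_nn by (simp add: fun_eq_iff)
    ultimately show ?thesis by simp
  qed
  have fy: "(\<integral>\<^sup>+ v. ennreal (\<Phi> v) * indicator {1..1 + real n} v \<partial>lborel) \<le> ennreal (\<integral> t. q t \<partial>\<mu>)" for n :: nat
  proof -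
    define y where "y = 1 + real n"
    have y: "1 \<le> y" by (simp add: y_def)
    define f where "f t v = indicator {1..y} v * psi a v t" for t v :: real
    have "(\<lambda>x. f (fst x) (snd x)) \<in> borel_measurable (borel \<Otimes>\<^sub>M borel)"
      unfolding f_def psi_def by measurable
    then have mf: "(\<lambda>x. f (fst x) (snd x)) \<in> borel_measurable (\<mu> \<Otimes>\<^sub>M lborel)"
      by (simp only: measurable_cong_sets[OF sML refl])
    have mnf: "(\<lambda>x. ennreal (norm (f (fst x) (snd x)))) \<in> borel_measurable (\<mu> \<Otimes>\<^sub>M lborel)"
      by (intro measurable_compose[OF mf]) measurable
    have pw: "ennreal (norm (f t v)) \<le> ennreal (q t) * indicator {1..y} v" for t v
    proof (cases "v \<in> {1..y}")
      case True
      then have "norm (f t v) = \<bar>psi a v t\<bar>" by (simp add: f_def)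
      also have "\<dots> \<le> q t" unfolding q_def using True by (intro psi_abs) simp
      finally show ?thesis using True by (simp add: ennreal_leI)
    next
      case False then show ?thesis by (simp add: f_def)
    qed
    have int_f: "integrable (\<mu> \<Otimes>\<^sub>M lborel) (\<lambda>x. f (fst x) (snd x))"
    proof -
      have "(\<integral>\<^sup>+ x. ennreal (norm (f (fst x) (snd x))) \<partial>(\<mu> \<Otimes>\<^sub>M lborel)) = (\<integral>\<^sup>+ t. \<integral>\<^sup>+ v. ennreal (norm (f t v)) \<partial>lborel \<partial>\<mu>)"
        using lborel.nn_integral_fst[OF mnf] by simp
      also have "\<dots> \<le> (\<integral>\<^sup>+ t. \<integral>\<^sup>+ v. ennreal (q t) * indicator {1..y} v \<partial>lborel \<partial>\<mu>)"
        by (intro nn_integral_mono pw)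
      also have "\<dots> = (\<integral>\<^sup>+ t. ennreal (q t) * ennreal (y - 1) \<partial>\<mu>)"
        using y by (intro nn_integral_cong) (simp add: nn_integral_cmult_indicator)
      also have "\<dots> = (\<integral>\<^sup>+ t. ennreal (q t) \<partial>\<mu>) * ennreal (y - 1)"
        using mq by (intro nn_integral_multc) (simp add: Mplus_meas[OF Mp])
      also have "\<dots> < \<infinity>" using qfin by (simp add: ennreal_mult_less_top)
      finally show ?thesis using mf by (simp add: integrable_iff_bounded)
    qed
    have int_f': "integrable (\<mu> \<Otimes>\<^sub>M lborel) (case_prod f)" using int_f by (simp add: split_beta')
    have Fub: "(\<integral> v. (\<integral> t. f t v \<partial>\<mu>) \<partial>lborel) = (\<integral> t. (\<integral> v. f t v \<partial>lborel) \<partial>\<mu>)"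
      by (rule PM.Fubini_integral[OF int_f'])
    have L: "(\<integral> t. f t v \<partial>\<mu>) = indicator {1..y} v * \<Phi> v" for v
      unfolding f_def \<Phi>_def by (rule integral_mult_right_zero)
    have R: "(\<integral> v. f t v \<partial>lborel) = q t - y / ((t - a)^2 + y^2)" for t
      unfolding f_def q_def by (rule psi_FTC[OF y])
    have int_R: "integrable \<mu> (\<lambda>t. q t - y / ((t - a)^2 + y^2))"
      using PM.integrable_fst[OF int_f'] by (simp add: R)
    have int_L: "integrable lborel (\<lambda>v. indicator {1..y} v * \<Phi> v)"
      using PM.integrable_snd[OF int_f'] by (simp add: L)
    have "(\<integral> v. indicator {1..y} v * \<Phi> v \<partial>lborel) = (\<integral> t. q t - y / ((t - a)^2 + y^2) \<partial>\<mu>)"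
      using Fub by (simp add: L R)
    also have "\<dots> \<le> (\<integral> t. q t \<partial>\<mu>)"
    proof (rule integral_mono[OF int_R int_q])
      fix t
      have "0 \<le> y / ((t - a)^2 + y^2)" using y by simp
      then show "q t - y / ((t - a)^2 + y^2) \<le> q t" by simp
    qed
    finally have le: "(\<integral> v. indicator {1..y} v * \<Phi> v \<partial>lborel) \<le> (\<integral> t. q t \<partial>\<mu>)" .
    have "(\<integral>\<^sup>+ v. ennreal (\<Phi> v) * indicator {1..y} v \<partial>lborel) = (\<integral>\<^sup>+ v. ennreal (indicator {1..y} v * \<Phi> v) \<partial>lborel)"
      by (intro nn_integral_cong) (simp add: indicator_def)
    also have "\<dots> = ennreal (\<integral> v. indicator {1..y} v * \<Phi> v \<partial>lborel)"
    proof (rule nn_integral_eq_integral[OF int_L])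
      show "AE v in lborel. 0 \<le> indicator {1..y} v * \<Phi> v"
      proof (rule AE_I2)
        fix v show "0 \<le> indicator {1..y} v * \<Phi> v"
        proof (cases "v \<in> {1..y}")
          case True then have "0 < v" by simp
          then show ?thesis using nn[of v] True by (simp add: \<Phi>_def)
        next
          case False then show ?thesis by simp
        qed
      qed
    qed
    also have "\<dots> \<le> ennreal (\<integral> t. q t \<partial>\<mu>)" using le by (rule ennreal_leI)
    finally show ?thesis unfolding y_def .
  qed
  have m\<Phi>: "(\<lambda>v. ennreal (\<Phi> v)) \<in> borel_measurable borel"
  proof -
    have "(\<lambda>x. psi a (fst x) (snd x)) \<in> borel_measurable (borel \<Otimes>\<^sub>M borel)" unfolding psi_def by measurable
    then have "(\<lambda>x. psi a (fst x) (snd x)) \<in> borel_measurable (lborel \<Otimes>\<^sub>M \<mu>)"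
      by (simp only: measurable_cong_sets[OF sLM refl])
    then have "\<Phi> \<in> borel_measurable lborel"
      unfolding \<Phi>_def by (intro Sm.borel_measurable_lebesgue_integral) (simp add: split_beta')
    then show ?thesis by simp
  qed
  have "(\<integral>\<^sup>+ v. ennreal (\<Phi> v) * indicator {1..} v \<partial>lborel) \<le> ennreal (\<integral> t. q t \<partial>\<mu>)"
    by (rule nn_sup_bound[OF m\<Phi> fy])
  then show ?thesis unfolding \<Phi>_def q_def .
qed

lemma lower_pt:
  assumes d: "0 < d" and s: "s < a - d" and t: "a + d < t"
  shows "ennreal (1 / (t - s)) \<le> ennreal (4 + 2 / d) *
           (\<integral>\<^sup>+ v. ennreal (al1 a v s * be1 a v t + al2 a v s * be2 a v t) * indicator {1..} v \<partial>lborel)"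
proof -
  define M where "M = max 1 (max (a - s) (t - a))"
  have M1: "1 \<le> M" by (simp add: M_def)
  have M0: "0 < M" using M1 by simp
  have sa: "s < a" "a < t" using s t d by auto
  have pw: "ennreal (1/4) * (ennreal (1 / v^2) * indicator {M..} v)
      \<le> ennreal (al1 a v s * be1 a v t + al2 a v s * be2 a v t) * indicator {1..} v" for v
  proof (cases "M \<le> v")
    case True
    then have v1: "1 \<le> v" using M1 by simp
    have v0: "0 < v" using v1 by simp
    have hs: "(s - a)^2 \<le> v^2"
    proof -
      have "\<bar>s - a\<bar> \<le> v" using True sa unfolding M_def by auto
      then have "\<bar>s - a\<bar>^2 \<le> v^2" by (intro power_mono) auto
      then show ?thesis by simp
    qed
    have ht: "(t - a)^2 \<le> v^2"
    proof -
      have "\<bar>t - a\<bar> \<le> v" using True sa unfolding M_def by auto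
      then have "\<bar>t - a\<bar>^2 \<le> v^2" by (intro power_mono) auto
      then show ?thesis by simp
    qed
    have vv: "0 < v^2" using v0 by simp
    have p1: "0 \<le> al1 a v s * be1 a v t" using sa by (simp add: al1_def be1_def)
    have a2: "v / (2 * v^2) \<le> al2 a v s"
      unfolding al2_def using sa hs v0 by (simp add: frac_le add_pos_nonneg)
    have b2: "v / (2 * v^2) \<le> be2 a v t"
      unfolding be2_def using sa ht v0 by (simp add: frac_le add_pos_nonneg)
    have "1/4 * (1 / v^2) = (v / (2 * v^2)) * (v / (2 * v^2))" using v0 by (simp add: power2_eq_square field_simps)
    also have "\<dots> \<le> al2 a v s * be2 a v t"
    proof -
      have z0: "0 \<le> v / (2 * v^2)" using v0 by simp
      then have "0 \<le> al2 a v s" using a2 by linarith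
      then show ?thesis using a2 b2 z0 by (intro mult_mono) auto
    qed
    finally have "1/4 * (1 / v^2) \<le> al1 a v s * be1 a v t + al2 a v s * be2 a v t" using p1 by linarith
    then have "ennreal (1/4 * (1 / v^2)) \<le> ennreal (al1 a v s * be1 a v t + al2 a v s * be2 a v t)"
      by (rule ennreal_leI)
    then show ?thesis using True v1 by (simp add: ennreal_mult[symmetric])
  next
    case False then show ?thesis by simp
  qed
  have "ennreal (1/4) * ennreal (1 / M) = ennreal (1/4) * (\<integral>\<^sup>+ v. ennreal (1 / v^2) * indicator {M..} v \<partial>lborel)"
    by (simp add: int_inv_sq[OF M0])
  also have "\<dots> = (\<integral>\<^sup>+ v. ennreal (1/4) * (ennreal (1 / v^2) * indicator {M..} v) \<partial>lborel)"
    by (rule nn_integral_cmult[symmetric]) simp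
  also have "\<dots> \<le> (\<integral>\<^sup>+ v. ennreal (al1 a v s * be1 a v t + al2 a v s * be2 a v t) * indicator {1..} v \<partial>lborel)"
    by (intro nn_integral_mono pw)
  finally have low: "ennreal (1 / (4 * M)) \<le> (\<integral>\<^sup>+ v. ennreal (al1 a v s * be1 a v t + al2 a v s * be2 a v t) * indicator {1..} v \<partial>lborel)"
    using M0 by (simp add: ennreal_mult[symmetric])
  have ts: "0 < t - s" using sa by simp
  have Mle: "M \<le> (t - s) + (t - s) / (2 * d)"
  proof -
    have "1 \<le> (t - s) / (2 * d)" using s t d by (simp add: field_simps)
    moreover have "a - s \<le> t - s" "t - a \<le> t - s" using sa by auto
    moreover have "0 \<le> (t - s) / (2 * d)" using ts d by simp
    ultimately show ?thesis unfolding M_def by auto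
  qed
  have real_ineq: "1 / (t - s) \<le> (4 + 2 / d) * (1 / (4 * M))"
  proof -
    have "(4 + 2 / d) * (1 / (4 * M)) = (1 + 1 / (2 * d)) / M" using d M0 by (simp add: field_simps)
    moreover have "1 / (t - s) \<le> (1 + 1 / (2 * d)) / M"
    proof -
      have "M \<le> (1 + 1 / (2 * d)) * (t - s)" using Mle by (simp add: algebra_simps)
      then show ?thesis using ts M0 d by (simp add: divide_simps mult.commute)
    qed
    ultimately show ?thesis by simp
  qed
  have "ennreal (1 / (t - s)) \<le> ennreal ((4 + 2 / d) * (1 / (4 * M)))" by (rule ennreal_leI[OF real_ineq])
  also have "\<dots> = ennreal (4 + 2 / d) * ennreal (1 / (4 * M))"
    by (rule ennreal_mult) (use d M0 in \<open>simp_all add: add_nonneg_nonneg\<close>)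
  also have "\<dots> \<le> ennreal (4 + 2 / d) * (\<integral>\<^sup>+ v. ennreal (al1 a v s * be1 a v t + al2 a v s * be2 a v t) * indicator {1..} v \<partial>lborel)"
    using low by (rule mult_left_mono) simp
  finally show ?thesis .
qed

lemma dir2:
  assumes M1: "Mplus 1 \<mu>1" and M2: "Mplus 1 \<mu>2" and d: "0 < d"
    and N1: "{a-d..} \<in> null_sets \<mu>1" and N2: "{..a+d} \<in> null_sets \<mu>2"
    and Mp: "Mplus 2 \<mu>"
    and idf: "\<forall>z. Im z > 0 \<longrightarrow> cauchy_tr 1 \<mu>1 z * cauchy_tr 1 \<mu>2 z = cauchy_tr 2 \<mu> z"
  shows "(\<integral>\<^sup>+ t\<in>{a<..}. (\<integral>\<^sup>+ s\<in>{..<a}. ennreal (1 / (t - s)) \<partial>\<mu>1) \<partial>\<mu>2) < \<infinity>"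
proof -
  interpret S1: sigma_finite_measure \<mu>1 by (rule Mplus_sigma_finite[OF M1]) simp
  interpret S2: sigma_finite_measure \<mu>2 by (rule Mplus_sigma_finite[OF M2]) simp
  interpret P: pair_sigma_finite \<mu>2 \<mu>1 ..
  define X where "X = \<mu>2 \<Otimes>\<^sub>M \<mu>1"
  have sets1: "sets \<mu>1 = sets borel" by (rule Mplus_sets[OF M1])
  have sets2: "sets \<mu>2 = sets borel" by (rule Mplus_sets[OF M2])
  have sX: "sets X = sets (borel \<Otimes>\<^sub>M borel)" unfolding X_def by (rule sets_pair_measure_cong[OF sets2 sets1])
  interpret SX: sigma_finite_measure X unfolding X_def by (intro sigma_finite_pair_measure) unfold_locales
  interpret PX: pair_sigma_finite X lborel ..
  have sXL: "sets (X \<Otimes>\<^sub>M lborel) = sets ((borel \<Otimes>\<^sub>M borel) \<Otimes>\<^sub>M borel)"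
    using sX by (rule sets_pair_measure_cong) simp
  have mX: "f \<in> borel_measurable X" if "f \<in> borel_measurable (borel \<Otimes>\<^sub>M borel)" for f :: "real \<times> real \<Rightarrow> 'c::topological_space"
    using that by (simp only: measurable_cong_sets[OF sX refl])
  have mXL: "f \<in> borel_measurable (X \<Otimes>\<^sub>M lborel)" if "f \<in> borel_measurable ((borel \<Otimes>\<^sub>M borel) \<Otimes>\<^sub>M borel)" for f :: "(real \<times> real) \<times> real \<Rightarrow> 'c::topological_space"
    using that by (simp only: measurable_cong_sets[OF sXL refl])
  have AEd1: "AE s in \<mu>1. s < a - d" using AE_not_in[OF N1] by eventually_elim auto
  have AEd2: "AE t in \<mu>2. a + d < t" using AE_not_in[OF N2] by eventually_elim auto
  have AE1: "AE s in \<mu>1. s < a" using AEd1 by eventually_elim (use d in auto)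
  have AE2: "AE t in \<mu>2. a < t" using AEd2 by eventually_elim (use d in auto)

  define \<Phi> where "\<Phi> v = (\<integral> t. psi a v t \<partial>\<mu>)" for v
  define I1 where "I1 v = (\<integral> s. al1 a v s \<partial>\<mu>1)" for v
  define I2 where "I2 v = (\<integral> s. al2 a v s \<partial>\<mu>1)" for v
  define J1 where "J1 v = (\<integral> t. be1 a v t \<partial>\<mu>2)" for v
  define J2 where "J2 v = (\<integral> t. be2 a v t \<partial>\<mu>2)" for v
  have al1_nn: "0 \<le> al1 a v s" for v s by (simp add: al1_def)
  have be1_nn: "0 \<le> be1 a v t" for v t by (simp add: be1_def)
  have al2_nn: "0 < v \<Longrightarrow> 0 \<le> al2 a v s" for v s by (simp add: al2_def add_nonneg_nonneg)
  have be2_nn: "0 < v \<Longrightarrow> 0 \<le> be2 a v t" for v t by (simp add: be2_def add_nonneg_nonneg)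
  have I1_nn: "0 \<le> I1 v" for v unfolding I1_def by (intro Bochner_Integration.integral_nonneg al1_nn)
  have J1_nn: "0 \<le> J1 v" for v unfolding J1_def by (intro Bochner_Integration.integral_nonneg be1_nn)
  have I2_nn: "0 < v \<Longrightarrow> 0 \<le> I2 v" for v unfolding I2_def by (intro Bochner_Integration.integral_nonneg al2_nn)
  have J2_nn: "0 < v \<Longrightarrow> 0 \<le> J2 v" for v unfolding J2_def by (intro Bochner_Integration.integral_nonneg be2_nn)
  have prod: "\<Phi> v = I1 v * J1 v + I2 v * J2 v" if v: "0 < v" for v
  proof -
    have "Im (Complex (- a) v) > 0" using v by simp
    then have "cauchy_tr 1 \<mu>1 (Complex (- a) v) * cauchy_tr 1 \<mu>2 (Complex (- a) v) = cauchy_tr 2 \<mu> (Complex (- a) v)"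
      using idf by blast
    from prod_formula[OF M1 M2 Mp AE1 AE2 this v] show ?thesis
      unfolding \<Phi>_def I1_def I2_def J1_def J2_def .
  qed
  have \<Phi>_nn: "0 \<le> \<Phi> v" if "0 < v" for v
    using prod[OF that] I1_nn J1_nn I2_nn[OF that] J2_nn[OF that] by simp
  have Nb: "(\<integral>\<^sup>+ v. ennreal (\<Phi> v) * indicator {1..} v \<partial>lborel) \<le> ennreal (\<integral> t. 1 / (1 + (t - a)^2) \<partial>\<mu>)"
    unfolding \<Phi>_def by (rule phi_bound[OF Mp]) (use \<Phi>_nn in \<open>simp add: \<Phi>_def\<close>)

  have ial1: "integrable \<mu>1 (al1 a v)" and ial2: "integrable \<mu>1 (al2 a v)" if v: "0 < v" for v
  proof -
    have z: "Im (Complex (- a) v) > 0" using v by simp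
    have i: "integrable \<mu>1 (\<lambda>s. 1 / (Complex (- a) v + complex_of_real s))" by (rule integrable_cauchy1[OF M1 z])
    have m: "{..<a} \<in> sets \<mu>1" using sets1 by simp
    have "integrable \<mu>1 (\<lambda>s. - Re (1 / (Complex (- a) v + complex_of_real s)) * indicator {..<a} s)"
      using i m by (intro integrable_real_mult_indicator integrable_minus integrable_Re)
    moreover have "(\<lambda>s. - Re (1 / (Complex (- a) v + complex_of_real s)) * indicator {..<a} s) = al1 a v"
      by (rule ext) (use v in \<open>simp add: zv re_inv al1_def indicator_def minus_divide_left\<close>)
    ultimately show "integrable \<mu>1 (al1 a v)" by (simp only:)
    have "integrable \<mu>1 (\<lambda>s. - Im (1 / (Complex (- a) v + complex_of_real s)) * indicator {..<a} s)"
      using i m by (intro integrable_real_mult_indicator integrable_minus integrable_Im)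
    moreover have "(\<lambda>s. - Im (1 / (Complex (- a) v + complex_of_real s)) * indicator {..<a} s) = al2 a v"
      by (rule ext) (use v in \<open>simp add: zv im_inv al2_def indicator_def\<close>)
    ultimately show "integrable \<mu>1 (al2 a v)" by (simp only:)
  qed
  have ibe1: "integrable \<mu>2 (be1 a v)" and ibe2: "integrable \<mu>2 (be2 a v)" if v: "0 < v" for v
  proof -
    have z: "Im (Complex (- a) v) > 0" using v by simp
    have i: "integrable \<mu>2 (\<lambda>s. 1 / (Complex (- a) v + complex_of_real s))" by (rule integrable_cauchy1[OF M2 z])
    have m: "{a<..} \<in> sets \<mu>2" using sets2 by simp
    have "integrable \<mu>2 (\<lambda>s. Re (1 / (Complex (- a) v + complex_of_real s)) * indicator {a<..} s)"
      using i m by (intro integrable_real_mult_indicator integrable_Re)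
    moreover have "(\<lambda>s. Re (1 / (Complex (- a) v + complex_of_real s)) * indicator {a<..} s) = be1 a v"
      by (rule ext) (use v in \<open>simp add: zv re_inv be1_def indicator_def\<close>)
    ultimately show "integrable \<mu>2 (be1 a v)" by (simp only:)
    have "integrable \<mu>2 (\<lambda>s. - Im (1 / (Complex (- a) v + complex_of_real s)) * indicator {a<..} s)"
      using i m by (intro integrable_real_mult_indicator integrable_minus integrable_Im)
    moreover have "(\<lambda>s. - Im (1 / (Complex (- a) v + complex_of_real s)) * indicator {a<..} s) = be2 a v"
      by (rule ext) (use v in \<open>simp add: zv im_inv be2_def indicator_def\<close>)
    ultimately show "integrable \<mu>2 (be2 a v)" by (simp only:)
  qed
  define gg where "gg v s t = al1 a v s * be1 a v t + al2 a v s * be2 a v t" for v s t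
  define c where "c = 4 + 2 / d"
  define J where "J t s = (\<integral>\<^sup>+ v. ennreal (gg v s t) * indicator {1..} v \<partial>lborel)" for t s
  have Dle: "(\<integral>\<^sup>+ t\<in>{a<..}. (\<integral>\<^sup>+ s\<in>{..<a}. ennreal (1 / (t - s)) \<partial>\<mu>1) \<partial>\<mu>2)
      \<le> (\<integral>\<^sup>+ t. (\<integral>\<^sup>+ s. ennreal c * J t s \<partial>\<mu>1) \<partial>\<mu>2)"
  proof (rule nn_integral_mono_AE)
    show "AE t in \<mu>2. (\<integral>\<^sup>+ s\<in>{..<a}. ennreal (1 / (t - s)) \<partial>\<mu>1) * indicator {a<..} t \<le> (\<integral>\<^sup>+ s. ennreal c * J t s \<partial>\<mu>1)"
      using AEd2
    proof eventually_elim
      fix t assume t: "a + d < t"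
      then have "a < t" using d by simp
      then have "(\<integral>\<^sup>+ s\<in>{..<a}. ennreal (1 / (t - s)) \<partial>\<mu>1) * indicator {a<..} t = (\<integral>\<^sup>+ s\<in>{..<a}. ennreal (1 / (t - s)) \<partial>\<mu>1)"
        by simp
      also have "\<dots> \<le> (\<integral>\<^sup>+ s. ennreal c * J t s \<partial>\<mu>1)"
      proof (rule nn_integral_mono_AE)
        show "AE s in \<mu>1. ennreal (1 / (t - s)) * indicator {..<a} s \<le> ennreal c * J t s"
          using AEd1
        proof eventually_elim
          fix s assume s: "s < a - d"
          then have "s < a" using d by simp
          then have "ennreal (1 / (t - s)) * indicator {..<a} s = ennreal (1 / (t - s))" by simp
          also have "\<dots> \<le> ennreal c * J t s" unfolding c_def J_def gg_def by (rule lower_pt[OF d s t])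
          finally show "ennreal (1 / (t - s)) * indicator {..<a} s \<le> ennreal c * J t s" .
        qed
      qed
      finally show "(\<integral>\<^sup>+ s\<in>{..<a}. ennreal (1 / (t - s)) \<partial>\<mu>1) * indicator {a<..} t \<le> (\<integral>\<^sup>+ s. ennreal c * J t s \<partial>\<mu>1)" .
    qed
  qed
  have "(\<lambda>x. ennreal (gg (snd x) (snd (fst x)) (fst (fst x))) * indicator {1..} (snd x)) \<in> borel_measurable ((borel \<Otimes>\<^sub>M borel) \<Otimes>\<^sub>M borel)"
    unfolding gg_def al1_def al2_def be1_def be2_def by measurable
  then have mGX: "(\<lambda>x. ennreal (gg (snd x) (snd (fst x)) (fst (fst x))) * indicator {1..} (snd x)) \<in> borel_measurable (X \<Otimes>\<^sub>M lborel)"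
    by (rule mXL)
  have mJ: "(\<lambda>p. J (fst p) (snd p)) \<in> borel_measurable X"
    unfolding J_def using mGX by (intro lborel.borel_measurable_nn_integral) (simp add: split_beta')
  have mcJ: "(\<lambda>p. ennreal c * J (fst p) (snd p)) \<in> borel_measurable X"
    using mJ by simp
  have gsum: "(\<integral>\<^sup>+ t. (\<integral>\<^sup>+ s. ennreal (gg v s t) \<partial>\<mu>1) \<partial>\<mu>2) = ennreal (\<Phi> v)" if v: "0 < v" for v
  proof -
    have mal1: "(\<lambda>s. ennreal (al1 a v s)) \<in> borel_measurable \<mu>1" unfolding al1_def by (intro Mplus_meas[OF M1]) measurable
    have mal2: "(\<lambda>s. ennreal (al2 a v s)) \<in> borel_measurable \<mu>1" unfolding al2_def by (intro Mplus_meas[OF M1]) measurable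
    have mbe1: "(\<lambda>s. ennreal (be1 a v s)) \<in> borel_measurable \<mu>2" unfolding be1_def by (intro Mplus_meas[OF M2]) measurable
    have mbe2: "(\<lambda>s. ennreal (be2 a v s)) \<in> borel_measurable \<mu>2" unfolding be2_def by (intro Mplus_meas[OF M2]) measurable
    have nI1: "(\<integral>\<^sup>+ s. ennreal (al1 a v s) \<partial>\<mu>1) = ennreal (I1 v)"
      unfolding I1_def by (rule nn_integral_eq_integral[OF ial1[OF v]]) (simp add: al1_nn)
    have nI2: "(\<integral>\<^sup>+ s. ennreal (al2 a v s) \<partial>\<mu>1) = ennreal (I2 v)"
      unfolding I2_def by (rule nn_integral_eq_integral[OF ial2[OF v]]) (simp add: al2_nn[OF v])
    have nJ1: "(\<integral>\<^sup>+ s. ennreal (be1 a v s) \<partial>\<mu>2) = ennreal (J1 v)"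
      unfolding J1_def by (rule nn_integral_eq_integral[OF ibe1[OF v]]) (simp add: be1_nn)
    have nJ2: "(\<integral>\<^sup>+ s. ennreal (be2 a v s) \<partial>\<mu>2) = ennreal (J2 v)"
      unfolding J2_def by (rule nn_integral_eq_integral[OF ibe2[OF v]]) (simp add: be2_nn[OF v])
    have pw: "ennreal (gg v s t) = ennreal (al1 a v s) * ennreal (be1 a v t) + ennreal (al2 a v s) * ennreal (be2 a v t)" for s t
      unfolding gg_def using al1_nn[of v s] be1_nn[of v t] al2_nn[OF v, of s] be2_nn[OF v, of t]
      by (simp add: ennreal_plus ennreal_mult)
    have inner: "(\<integral>\<^sup>+ s. ennreal (gg v s t) \<partial>\<mu>1) = ennreal (I1 v) * ennreal (be1 a v t) + ennreal (I2 v) * ennreal (be2 a v t)" for t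
    proof -
      have "(\<integral>\<^sup>+ s. ennreal (gg v s t) \<partial>\<mu>1)
          = (\<integral>\<^sup>+ s. ennreal (al1 a v s) * ennreal (be1 a v t) + ennreal (al2 a v s) * ennreal (be2 a v t) \<partial>\<mu>1)"
        by (simp only: pw)
      also have "\<dots> = (\<integral>\<^sup>+ s. ennreal (al1 a v s) * ennreal (be1 a v t) \<partial>\<mu>1) + (\<integral>\<^sup>+ s. ennreal (al2 a v s) * ennreal (be2 a v t) \<partial>\<mu>1)"
        using mal1 mal2 by (intro nn_integral_add) simp_all
      also have "\<dots> = ennreal (I1 v) * ennreal (be1 a v t) + ennreal (I2 v) * ennreal (be2 a v t)"
        by (simp only: nn_integral_multc[OF mal1] nn_integral_multc[OF mal2] nI1 nI2)
      finally show ?thesis .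
    qed
    have "(\<integral>\<^sup>+ t. (\<integral>\<^sup>+ s. ennreal (gg v s t) \<partial>\<mu>1) \<partial>\<mu>2)
        = (\<integral>\<^sup>+ t. ennreal (I1 v) * ennreal (be1 a v t) + ennreal (I2 v) * ennreal (be2 a v t) \<partial>\<mu>2)"
      by (simp only: inner)
    also have "\<dots> = (\<integral>\<^sup>+ t. ennreal (I1 v) * ennreal (be1 a v t) \<partial>\<mu>2) + (\<integral>\<^sup>+ t. ennreal (I2 v) * ennreal (be2 a v t) \<partial>\<mu>2)"
      using mbe1 mbe2 by (intro nn_integral_add) simp_all
    also have "\<dots> = ennreal (I1 v) * ennreal (J1 v) + ennreal (I2 v) * ennreal (J2 v)"
      by (simp only: nn_integral_cmult[OF mbe1] nn_integral_cmult[OF mbe2] nJ1 nJ2)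
    also have "\<dots> = ennreal (I1 v * J1 v + I2 v * J2 v)"
      using I1_nn[of v] J1_nn[of v] I2_nn[OF v] J2_nn[OF v] by (simp add: ennreal_plus ennreal_mult)
    also have "\<dots> = ennreal (\<Phi> v)" by (simp add: prod[OF v])
    finally show ?thesis .
  qed
  have perv: "(\<integral>\<^sup>+ p. ennreal (gg v (snd p) (fst p)) * indicator {1..} v \<partial>X) = ennreal (\<Phi> v) * indicator {1..} v" for v
  proof (cases "1 \<le> v")
    case True
    then have v: "0 < v" by simp
    have "(\<lambda>p. ennreal (gg v (snd p) (fst p))) \<in> borel_measurable (borel \<Otimes>\<^sub>M borel)"
      unfolding gg_def al1_def al2_def be1_def be2_def by measurable
    then have m: "(\<lambda>p. ennreal (gg v (snd p) (fst p))) \<in> borel_measurable (\<mu>2 \<Otimes>\<^sub>M \<mu>1)"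
      using mX unfolding X_def by blast
    have "(\<integral>\<^sup>+ p. ennreal (gg v (snd p) (fst p)) * indicator {1..} v \<partial>X) = (\<integral>\<^sup>+ p. ennreal (gg v (snd p) (fst p)) \<partial>X)"
      using True by simp
    also have "\<dots> = (\<integral>\<^sup>+ t. (\<integral>\<^sup>+ s. ennreal (gg v s t) \<partial>\<mu>1) \<partial>\<mu>2)"
      unfolding X_def using S1.nn_integral_fst[OF m] by simp
    also have "\<dots> = ennreal (\<Phi> v)" by (rule gsum[OF v])
    finally show ?thesis using True by simp
  next
    case False then show ?thesis by simp
  qed
  have "(\<integral>\<^sup>+ t. (\<integral>\<^sup>+ s. ennreal c * J t s \<partial>\<mu>1) \<partial>\<mu>2) = (\<integral>\<^sup>+ p. ennreal c * J (fst p) (snd p) \<partial>X)"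
    unfolding X_def using S1.nn_integral_fst[OF mcJ[unfolded X_def]] by simp
  also have "\<dots> = ennreal c * (\<integral>\<^sup>+ p. J (fst p) (snd p) \<partial>X)"
    by (rule nn_integral_cmult[OF mJ])
  also have "(\<integral>\<^sup>+ p. J (fst p) (snd p) \<partial>X) = (\<integral>\<^sup>+ v. (\<integral>\<^sup>+ p. ennreal (gg v (snd p) (fst p)) * indicator {1..} v \<partial>X) \<partial>lborel)"
    unfolding J_def using PX.Fubini[OF mGX] by simp
  also have "\<dots> = (\<integral>\<^sup>+ v. ennreal (\<Phi> v) * indicator {1..} v \<partial>lborel)"
    by (simp only: perv)
  finally have "(\<integral>\<^sup>+ t. (\<integral>\<^sup>+ s. ennreal c * J t s \<partial>\<mu>1) \<partial>\<mu>2) \<le> ennreal c * ennreal (\<integral> t. 1 / (1 + (t - a)^2) \<partial>\<mu>)"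
    using Nb by (simp add: mult_left_mono)
  also have "\<dots> < \<infinity>" by (simp add: ennreal_mult_less_top)
  finally show ?thesis using Dle by (simp add: le_less_trans)
qed

theorem theorem7p8:
  fixes \<mu>1 \<mu>2 :: "real measure" and a :: real
  assumes "Mplus 1 \<mu>1" and "Mplus 1 \<mu>2"
    and "msupp \<mu>1 \<subseteq> {..<a}" and "msupp \<mu>2 \<subseteq> {a<..}"
  shows "(\<exists>\<mu>. Mplus 2 \<mu> \<and>
            (\<forall>z. Im z > 0 \<longrightarrow> cauchy_tr 1 \<mu>1 z * cauchy_tr 1 \<mu>2 z = cauchy_tr 2 \<mu> z))
         \<longleftrightarrow> (\<integral>\<^sup>+ t\<in>{a<..}. (\<integral>\<^sup>+ s\<in>{..<a}. ennreal (1 / (t - s)) \<partial>\<mu>1) \<partial>\<mu>2) < \<infinity>"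
proof -
  note M1 = assms(1) and M2 = assms(2)
  have s1: "sets \<mu>1 = sets borel" by (rule Mplus_sets[OF M1])
  have s2: "sets \<mu>2 = sets borel" by (rule Mplus_sets[OF M2])
  obtain d1 where d1: "0 < d1" "{a - d1..} \<in> null_sets \<mu>1" using msupp_left_gap[OF s1 assms(3)] by blast
  obtain d2 where d2: "0 < d2" "{..a + d2} \<in> null_sets \<mu>2" using msupp_right_gap[OF s2 assms(4)] by blast
  define d where "d = min d1 d2"
  have d: "0 < d" using d1 d2 by (simp add: d_def)
  have N1d: "{a - d..} \<in> null_sets \<mu>1"
    by (rule null_sets_subset[OF d1(2)]) (auto simp: s1 d_def)
  have N2d: "{..a + d} \<in> null_sets \<mu>2"
    by (rule null_sets_subset[OF d2(2)]) (auto simp: s2 d_def)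
  have N1a: "{a..} \<in> null_sets \<mu>1"
    by (rule null_sets_subset[OF d1(2)]) (use d1 in \<open>auto simp: s1\<close>)
  have N2a: "{..a} \<in> null_sets \<mu>2"
    by (rule null_sets_subset[OF d2(2)]) (use d2 in \<open>auto simp: s2\<close>)
  show ?thesis
  proof
    assume "\<exists>\<mu>. Mplus 2 \<mu> \<and> (\<forall>z. Im z > 0 \<longrightarrow> cauchy_tr 1 \<mu>1 z * cauchy_tr 1 \<mu>2 z = cauchy_tr 2 \<mu> z)"
    then obtain \<mu> where Mp: "Mplus 2 \<mu>"
      and idf: "\<forall>z. Im z > 0 \<longrightarrow> cauchy_tr 1 \<mu>1 z * cauchy_tr 1 \<mu>2 z = cauchy_tr 2 \<mu> z" by blast
    show "(\<integral>\<^sup>+ t\<in>{a<..}. (\<integral>\<^sup>+ s\<in>{..<a}. ennreal (1 / (t - s)) \<partial>\<mu>1) \<partial>\<mu>2) < \<infinity>"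
      by (rule dir2[OF M1 M2 d N1d N2d Mp idf])
  next
    assume "(\<integral>\<^sup>+ t\<in>{a<..}. (\<integral>\<^sup>+ s\<in>{..<a}. ennreal (1 / (t - s)) \<partial>\<mu>1) \<partial>\<mu>2) < \<infinity>"
    then show "\<exists>\<mu>. Mplus 2 \<mu> \<and> (\<forall>z. Im z > 0 \<longrightarrow> cauchy_tr 1 \<mu>1 z * cauchy_tr 1 \<mu>2 z = cauchy_tr 2 \<mu> z)"
      by (rule dir1[OF M1 M2 N1a N2a])
  qed
qed

end
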